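(* Let $n$ be a positive integer and let $u:\{-n,\dots,n\}\to\mathbb{R}$ satisfy $u(j)=u(-j)$ for all $j$, $\sum_{j=-n}^{n}u(j)=1$, and $\widehat{u}(\xi)\ge 0$ for all $\xi\in\mathbb{T}$. Then $$\sup_{0\neq f\in\ell^2(\mathbb{Z})}\frac{\|\nabla^{4}(u\ast f)\|_{\ell^2(\mathbb{Z})}}{\|f\|_{\ell^2(\mathbb{Z})}}\ \ge\ \frac{2^6}{(n+2)^2}\tan^2\!\left(\frac{\pi}{2n+4}\right).$$ Moreover, equality holds if and only if for every $m\in\{0,\dots,n\}$, $$u(m)=u(-m)=\frac{1}{\pi}\int_{-1}^{1}S_n(x)T_m(x)\frac{dx}{\sqrt{1-x^2}},$$ where $$S_n(x)=\frac{8}{(n+2)^2}\tan^2\!\left(\frac{\pi}{2n+4}\right)\frac{1}{(1-x)^2}\left(1+T_{n+2}\!\left(\frac{1+\cos(\pi/(n+2))}{2}(x+1)-1\right)\right)$$ (a polynomial of degree $n$).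
   Context: Functions on $\{-n,\dots,n\}$ are regarded as functions on $\mathbb{Z}$ vanishing outside it. $\nabla g(k)=g(k+1)-g(k)$, $\nabla^{\ell}=\nabla(\nabla^{\ell-1})$; $(u\ast f)(k)=\sum_j u(j)f(k-j)$; $\mathbb{T}=\mathbb{R}/2\pi\mathbb{Z}$; $\widehat{u}(\xi)=\sum_k u(k)e^{-ik\xi}$. $T_m$ denotes the Chebyshev polynomial of the first kind of degree $m$, $T_m(\cos\theta)=\cos(m\theta)$. The supremum is over nonzero $f\in\ell^2(\mathbb{Z})$. *)

theory Defs
  imports "HOL-Analysis.Analysis"
begin

fun cheb_T :: "nat \<Rightarrow> real \<Rightarrow> real" where
  "cheb_T 0 x = 1"
| "cheb_T (Suc 0) x = x"
| "cheb_T (Suc (Suc m)) x = 2 * x * cheb_T (Suc m) x - cheb_T m x"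

definition nabla :: "(int \<Rightarrow> real) \<Rightarrow> int \<Rightarrow> real" where
  "nabla g k = g (k + 1) - g k"

definition nabla_pow :: "nat \<Rightarrow> (int \<Rightarrow> real) \<Rightarrow> int \<Rightarrow> real" where
  "nabla_pow l = nabla ^^ l"

definition conv :: "nat \<Rightarrow> (int \<Rightarrow> real) \<Rightarrow> (int \<Rightarrow> real) \<Rightarrow> int \<Rightarrow> real" where
  "conv n u f k = (\<Sum>j = - int n .. int n. u j * f (k - j))"

definition fourier :: "nat \<Rightarrow> (int \<Rightarrow> real) \<Rightarrow> real \<Rightarrow> complex" where
  "fourier n u \<xi> = (\<Sum>k = - int n .. int n. complex_of_real (u k) * exp (- \<i> * of_int k * of_real \<xi>))"

definition in_l2 :: "(int \<Rightarrow> real) \<Rightarrow> bool" where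
  "in_l2 f \<longleftrightarrow> (\<lambda>k. (f k)\<^sup>2) summable_on UNIV"

definition l2norm :: "(int \<Rightarrow> real) \<Rightarrow> real" where
  "l2norm f = sqrt (\<Sum>\<^sub>\<infinity>k. (f k)\<^sup>2)"

definition op_sup :: "nat \<Rightarrow> (int \<Rightarrow> real) \<Rightarrow> real" where
  "op_sup n u = Sup {l2norm (nabla_pow 4 (conv n u f)) / l2norm f | f. in_l2 f \<and> f \<noteq> (\<lambda>_. 0)}"

definition S_poly :: "nat \<Rightarrow> real \<Rightarrow> real" where
  "S_poly n x = 8 / (real n + 2)\<^sup>2 * (tan (pi / (2 * real n + 4)))\<^sup>2 * (1 / (1 - x)\<^sup>2)
     * (1 + cheb_T (n + 2) ((1 + cos (pi / (real n + 2))) / 2 * (x + 1) - 1))"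

end

theory Submission
  imports Defs "HOL-Computational_Algebra.Polynomial"
begin

lemma cheb_T_cos: "cheb_T m (cos t) = cos (real m * t)"
proof (induction m "cos t" rule: cheb_T.induct)
  case 1 then show ?case by simp
next
  case 2 then show ?case by simp
next
  case (3 m)
  have "cos (real (Suc (Suc m)) * t) = 2 * cos t * cos (real (Suc m) * t) - cos (real m * t)"
    using cos_add[of "real (Suc m) * t" t] cos_diff[of "real (Suc m) * t" t]
    by (simp add: algebra_simps distrib_right)
  then show ?case using 3 by simp
qed

lemma cheb_T_bound: assumes "\<bar>y\<bar> \<le> 1" shows "\<bar>cheb_T m y\<bar> \<le> 1"
proof -
  have "y = cos (arccos y)" using assms by simp
  then have "cheb_T m y = cos (real m * arccos y)" by (metis cheb_T_cos)
  then show ?thesis by simp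
qed

fun cheb_poly :: "nat \<Rightarrow> real poly" where
  "cheb_poly 0 = 1"
| "cheb_poly (Suc 0) = [:0, 1:]"
| "cheb_poly (Suc (Suc m)) = [:0, 2:] * cheb_poly (Suc m) - cheb_poly m"

lemma poly_cheb_poly[simp]: "poly (cheb_poly m) x = cheb_T m x"
  by (induction m rule: cheb_poly.induct) auto

lemma cheb_poly_deg_lc:
  "degree (cheb_poly m) = m \<and> coeff (cheb_poly m) m \<noteq> 0"
proof (induction m rule: cheb_poly.induct)
  case 1 then show ?case by simp
next
  case 2 then show ?case by simp
next
  case (3 m)
  have c: "coeff (cheb_poly (Suc (Suc m))) (Suc (Suc m)) = 2 * coeff (cheb_poly (Suc m)) (Suc m)"
    using 3 by (simp add: coeff_eq_0)
  have "degree (cheb_poly (Suc (Suc m))) \<le> Suc (Suc m)"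
  proof -
    have "degree ([:0, 2:] * cheb_poly (Suc m)) \<le> Suc (Suc m)"
      using degree_mult_le[of "[:0,2:]" "cheb_poly (Suc m)"] 3 by simp
    moreover have "degree (cheb_poly m) \<le> Suc (Suc m)" using 3 by simp
    ultimately show ?thesis
      using degree_diff_le by (metis cheb_poly.simps(3))
  qed
  moreover have "coeff (cheb_poly (Suc (Suc m))) (Suc (Suc m)) \<noteq> 0" using c 3 by simp
  ultimately show ?case using le_degree le_antisym by blast
qed

lemma degree_cheb_poly[simp]: "degree (cheb_poly m) = m"
  using cheb_poly_deg_lc by blast

lemma cheb_expand:
  fixes P :: "real poly"
  assumes "degree P \<le> d"
  shows "\<exists>c. P = (\<Sum>j\<le>d. smult (c j) (cheb_poly j))"
  using assms
proof (induction d arbitrary: P)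
  case 0
  then obtain a where "P = [:a:]" by (metis degree_0_id le_zero_eq)
  then show ?case by (intro exI[of _ "\<lambda>_. a"]) simp
next
  case (Suc d)
  define c' where "c' = coeff P (Suc d) / coeff (cheb_poly (Suc d)) (Suc d)"
  define P' where "P' = P - smult c' (cheb_poly (Suc d))"
  have lc: "coeff (cheb_poly (Suc d)) (Suc d) \<noteq> 0" using cheb_poly_deg_lc by blast
  have "degree P' \<le> d"
  proof (rule degree_le)
    show "\<forall>i>d. coeff P' i = 0"
    proof (intro allI impI)
      fix i assume "d < i"
      show "coeff P' i = 0"
      proof (cases "i = Suc d")
        case True then show ?thesis using lc by (simp add: P'_def c'_def)
      next
        case False
        then have "i > Suc d" using \<open>d < i\<close> by simp
        then show ?thesis using Suc.prems by (simp add: P'_def coeff_eq_0)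
      qed
    qed
  qed
  then obtain c where c: "P' = (\<Sum>j\<le>d. smult (c j) (cheb_poly j))" using Suc.IH by blast
  have "P = (\<Sum>j\<le>Suc d. smult ((c(Suc d := c')) j) (cheb_poly j))"
    using c by (simp add: P'_def algebra_simps)
  then show ?case by (intro exI[of _ "c(Suc d := c')"])
qed

definition Aint :: "int \<Rightarrow> real \<Rightarrow> real" where
  "Aint k t = (if k = 0 then t else sin (of_int k * t) / of_int k)"

lemma Aint_deriv: "(Aint k has_real_derivative cos (of_int k * t)) (at t)"
proof (cases "k = 0")
  case True
  then show ?thesis unfolding Aint_def by (auto intro!: derivative_eq_intros)
next
  case False
  then show ?thesis unfolding Aint_def by (auto intro!: derivative_eq_intros)
qed

lemma Aint_pi: "Aint k pi - Aint k 0 = (if k = 0 then pi else 0)"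
proof -
  have "sin (of_int k * pi) = 0" using sin_times_pi_eq_0[of "of_int k"] by (simp add: mult.commute)
  then show ?thesis by (simp add: Aint_def)
qed

lemma cheb_orth:
  "((\<lambda>x. cheb_T j x * cheb_T m x / sqrt (1 - x\<^sup>2)) has_integral
     (if j = m then (if m = 0 then pi else pi / 2) else 0)) {-1..1}"
proof -
  define G where "G t = (Aint (int j - int m) t + Aint (int j + int m) t) / 2" for t
  define F where "F x = - G (arccos x)" for x
  have G': "(G has_real_derivative cos (real j * t) * cos (real m * t)) (at t)" for t
  proof -
    have "(G has_real_derivative (cos (of_int (int j - int m) * t) + cos (of_int (int j + int m) * t)) / 2) (at t)"
      unfolding G_def by (auto intro!: derivative_eq_intros Aint_deriv)
    moreover have "(cos (of_int (int j - int m) * t) + cos (of_int (int j + int m) * t)) / 2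
        = cos (real j * t) * cos (real m * t)"
      using cos_add[of "real j * t" "real m * t"] cos_diff[of "real j * t" "real m * t"]
      by (simp add: algebra_simps)
    ultimately show ?thesis by simp
  qed
  have F': "(F has_vector_derivative (cheb_T j x * cheb_T m x / sqrt (1 - x\<^sup>2))) (at x)"
    if "x \<in> {-1<..<1}" for x
  proof -
    have x: "-1 < x" "x < 1" using that by auto
    have "(F has_real_derivative - (cos (real j * arccos x) * cos (real m * arccos x) * inverse (- sqrt (1 - x\<^sup>2)))) (at x)"
      unfolding F_def
      by (intro DERIV_minus DERIV_chain2[OF G' DERIV_arccos[OF x]])
    moreover have "cos (real j * arccos x) = cheb_T j x" "cos (real m * arccos x) = cheb_T m x"
      using cheb_T_cos[of j "arccos x"] cheb_T_cos[of m "arccos x"] x by auto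
    ultimately have "(F has_real_derivative (cheb_T j x * cheb_T m x / sqrt (1 - x\<^sup>2))) (at x)"
      by (simp add: divide_inverse)
    then show ?thesis using has_real_derivative_iff_has_vector_derivative by blast
  qed
  have cont: "continuous_on {-1..1} F"
  proof -
    have "continuous_on UNIV G"
      using G' by (meson DERIV_isCont continuous_at_imp_continuous_on)
    then have "continuous_on {-1..1} (\<lambda>x. G (arccos x))"
      using continuous_on_compose2[OF _ continuous_on_arccos', of UNIV G] by auto
    then show ?thesis unfolding F_def by (rule continuous_on_minus)
  qed
  have "((\<lambda>x. cheb_T j x * cheb_T m x / sqrt (1 - x\<^sup>2)) has_integral (F 1 - F (-1))) {-1..1}"
    by (rule fundamental_theorem_of_calculus_interior[OF _ cont]) (use F' in auto)
  moreover have "F 1 - F (-1) = (if j = m then (if m = 0 then pi else pi / 2) else 0)"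
    using Aint_pi[of "int j - int m"] Aint_pi[of "int j + int m"]
    by (auto simp: F_def G_def field_simps)
  ultimately show ?thesis by simp
qed

lemma sym_sum:
  fixes g :: "int \<Rightarrow> 'a::comm_monoid_add"
  shows "(\<Sum>k = - int n .. int n. g k) = g 0 + (\<Sum>m = 1..n. g (int m) + g (- int m))"
proof (induction n)
  case 0 then show ?case by simp
next
  case (Suc n)
  have e: "{- int (Suc n) .. int (Suc n)} = insert (int (Suc n)) (insert (- int (Suc n)) {- int n .. int n})"
    by auto
  have "(\<Sum>k = - int (Suc n) .. int (Suc n). g k) = g (int (Suc n)) + (g (- int (Suc n)) + (\<Sum>k = - int n .. int n. g k))"
    unfolding e by (subst sum.insert; simp)+
  then show ?case using Suc by (simp add: algebra_simps)
qed

definition upoly :: "nat \<Rightarrow> (int \<Rightarrow> real) \<Rightarrow> real poly" where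
  "upoly n u = [:u 0:] + (\<Sum>m = 1..n. smult (2 * u (int m)) (cheb_poly m))"

lemma poly_upoly: "poly (upoly n u) x = u 0 + (\<Sum>m = 1..n. 2 * u (int m) * cheb_T m x)"
  by (simp add: upoly_def poly_sum)

lemma degree_upoly: "degree (upoly n u) \<le> n"
  unfolding upoly_def
  by (intro degree_add_le degree_sum_le) (auto intro: order.trans[OF degree_smult_le])

lemma fourier_upoly:
  assumes sym: "\<And>j. u j = u (- j)"
  shows "fourier n u t = complex_of_real (poly (upoly n u) (cos t))"
proof -
  define g where "g k = complex_of_real (u k) * exp (- \<i> * of_int k * of_real t)" for k
  have gm: "g (int m) + g (- int m) = complex_of_real (2 * u (int m) * cheb_T m (cos t))" for m
  proof -
    have c: "complex_of_real (cos (real m * t)) = (exp (\<i> * of_real (real m * t)) + exp (- (\<i> * of_real (real m * t)))) / 2"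
      by (simp only: cos_of_real[symmetric] cos_exp_eq)
    have "g (int m) + g (- int m) = complex_of_real (u (int m)) * (exp (- (\<i> * of_real (real m * t))) + exp (\<i> * of_real (real m * t)))"
      using sym[of "int m"] by (simp add: g_def algebra_simps)
    also have "\<dots> = complex_of_real (u (int m)) * (2 * complex_of_real (cos (real m * t)))"
      by (subst c) (simp add: algebra_simps)
    also have "\<dots> = complex_of_real (2 * u (int m) * cos (real m * t))"
      by simp
    finally show ?thesis by (simp add: cheb_T_cos)
  qed
  have "fourier n u t = (\<Sum>k = - int n .. int n. g k)" by (simp add: fourier_def g_def)
  also have "\<dots> = g 0 + (\<Sum>m = 1..n. g (int m) + g (- int m))" by (rule sym_sum)
  also have "\<dots> = complex_of_real (u 0) + (\<Sum>m = 1..n. complex_of_real (2 * u (int m) * cheb_T m (cos t)))"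
    by (simp only: gm) (simp add: g_def)
  also have "\<dots> = complex_of_real (poly (upoly n u) (cos t))"
    by (simp add: poly_upoly)
  finally show ?thesis .
qed

lemma upoly_one:
  assumes sym: "\<And>j. u j = u (- j)" and s: "(\<Sum>j = - int n .. int n. u j) = 1"
  shows "poly (upoly n u) 1 = 1"
proof -
  have "cheb_T m 1 = 1" for m using cheb_T_cos[of m 0] by simp
  then have "poly (upoly n u) 1 = u 0 + (\<Sum>m = 1..n. u (int m) + u (- int m))"
    using sym by (simp add: poly_upoly)
  also have "\<dots> = 1" using s sym_sum[of u n] by simp
  finally show ?thesis .
qed

lemma upoly_nonneg:
  assumes sym: "\<And>j. u j = u (- j)" and pos: "\<And>\<xi>. fourier n u \<xi> \<in> \<real>\<^sub>\<ge>\<^sub>0"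
    and x: "-1 \<le> x" "x \<le> 1"
  shows "poly (upoly n u) x \<ge> 0"
proof -
  have "x = cos (arccos x)" using x by simp
  then have "complex_of_real (poly (upoly n u) x) \<in> \<real>\<^sub>\<ge>\<^sub>0"
    using pos[of "arccos x"] fourier_upoly[of u n "arccos x", OF sym] by metis
  then show ?thesis by (simp add: complex_nonneg_Reals_iff)
qed

definition Ef :: "real \<Rightarrow> int \<Rightarrow> complex" where
  "Ef t k = exp (\<i> * of_int k * of_real t)"

lemma Ef_mult: "Ef t j * Ef t k = Ef t (j + k)"
  by (simp add: Ef_def exp_add[symmetric] algebra_simps)

lemma cnj_Ef: "cnj (Ef t k) = Ef t (- k)"
  by (simp add: Ef_def exp_cnj)

lemma int_Ef: "((\<lambda>t. Ef t m) has_integral (if m = 0 then 2 * complex_of_real pi else 0)) {0 .. 2 * pi}"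
proof (cases "m = 0")
  case True
  then show ?thesis using has_integral_const_real[of "1::complex" 0 "2*pi"]
    by (simp add: Ef_def scaleR_conv_of_real)
next
  case False
  define F where "F t = exp (\<i> * of_int m * of_real t) / (\<i> * of_int m)" for t
  have d: "(F has_vector_derivative Ef t m) (at t within {0..2*pi})" for t
  proof -
    have "((\<lambda>z. exp (\<i> * of_int m * z) / (\<i> * of_int m)) has_field_derivative
          (\<i> * of_int m) * exp (\<i> * of_int m * of_real t) / (\<i> * of_int m)) (at (of_real t))"
      by (auto intro!: derivative_eq_intros)
    then have "((\<lambda>z. exp (\<i> * of_int m * z) / (\<i> * of_int m)) has_field_derivative
          Ef t m) (at (of_real t))" using False by (simp add: Ef_def)
    then show ?thesis unfolding F_def by (rule has_vector_derivative_real_field)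
  qed
  have "((\<lambda>t. Ef t m) has_integral (F (2*pi) - F 0)) {0 .. 2*pi}"
    by (rule fundamental_theorem_of_calculus) (use d in auto)
  moreover have "exp (\<i> * of_int m * of_real (2 * pi)) = 1"
    using exp_integer_2pi[of "of_int m"] by (simp add: algebra_simps)
  ultimately show ?thesis using False by (simp add: F_def)
qed

lemma parseval:
  fixes g :: "int \<Rightarrow> real"
  assumes "finite V"
  shows "((\<lambda>t. (cmod (\<Sum>k\<in>V. of_real (g k) * Ef t k))\<^sup>2) has_integral (2 * pi * (\<Sum>k\<in>V. (g k)\<^sup>2))) {0 .. 2*pi}"
proof -
  define z where "z t = (\<Sum>k\<in>V. of_real (g k) * Ef t k)" for t
  have zz: "z t * cnj (z t) = (\<Sum>j\<in>V. \<Sum>k\<in>V. of_real (g j * g k) * Ef t (j - k))" for t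
  proof -
    have "z t * cnj (z t) = (\<Sum>j\<in>V. of_real (g j) * Ef t j) * (\<Sum>k\<in>V. of_real (g k) * Ef t (- k))"
      by (simp add: z_def cnj_Ef)
    also have "\<dots> = (\<Sum>j\<in>V. \<Sum>k\<in>V. (of_real (g j) * Ef t j) * (of_real (g k) * Ef t (- k)))"
      by (simp add: sum_product)
    also have "\<dots> = (\<Sum>j\<in>V. \<Sum>k\<in>V. of_real (g j * g k) * Ef t (j - k))"
      by (intro sum.cong refl) (simp add: algebra_simps Ef_mult)
    finally show ?thesis .
  qed
  have "((\<lambda>t. \<Sum>j\<in>V. \<Sum>k\<in>V. of_real (g j * g k) * Ef t (j - k)) has_integral
        (\<Sum>j\<in>V. \<Sum>k\<in>V. of_real (g j * g k) * (if j - k = 0 then 2 * complex_of_real pi else 0))) {0 .. 2*pi}"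
    using assms by (intro has_integral_sum has_integral_mult_right int_Ef)
  moreover have "(\<Sum>j\<in>V. \<Sum>k\<in>V. of_real (g j * g k) * (if j - k = 0 then 2 * complex_of_real pi else 0))
       = (of_real (2 * pi * (\<Sum>k\<in>V. (g k)\<^sup>2)) :: complex)"
  proof -
    have "(\<Sum>j\<in>V. \<Sum>k\<in>V. of_real (g j * g k) * (if j - k = 0 then 2 * complex_of_real pi else 0))
        = (\<Sum>j\<in>V. (of_real (g j * g j) * (2 * complex_of_real pi) :: complex))"
      using assms by (simp add: if_distrib[of "\<lambda>x. _ * x"] sum.delta cong: if_cong)
    then show ?thesis by (simp add: sum_distrib_left power2_eq_square algebra_simps)
  qed
  ultimately have i1: "((\<lambda>t. z t * cnj (z t)) has_integral of_real (2 * pi * (\<Sum>k\<in>V. (g k)\<^sup>2))) {0 .. 2*pi}"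
    by (simp add: zz)
  have cz: "continuous_on {0..2*pi} z"
    unfolding z_def Ef_def by (intro continuous_intros)
  then have "(\<lambda>t. (cmod (z t))\<^sup>2) integrable_on {0..2*pi}"
    by (intro integrable_continuous_interval continuous_intros)
  then obtain J where J: "((\<lambda>t. (cmod (z t))\<^sup>2) has_integral J) {0..2*pi}" by blast
  then have "((\<lambda>t. of_real ((cmod (z t))\<^sup>2) :: complex) has_integral of_real J) {0..2*pi}"
    by (rule has_integral_of_real)
  then have "((\<lambda>t. z t * cnj (z t)) has_integral of_real J) {0..2*pi}"
    by (simp only: complex_norm_square)
  then have "(of_real J :: complex) = of_real (2 * pi * (\<Sum>k\<in>V. (g k)\<^sup>2))"
    using i1 has_integral_unique by blast
  then have "J = 2 * pi * (\<Sum>k\<in>V. (g k)\<^sup>2)" using of_real_eq_iff by blast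
  then show ?thesis using J by (simp add: z_def)
qed

lemma nabla4: "nabla_pow 4 g k = g (k + 4) - 4 * g (k + 3) + 6 * g (k + 2) - 4 * g (k + 1) + g k"
  by (simp add: nabla_pow_def nabla_def numeral_eq_Suc algebra_simps)

definition Tr :: "nat \<Rightarrow> (int \<Rightarrow> real) \<Rightarrow> real \<Rightarrow> complex" where
  "Tr M g t = (\<Sum>k = - int M .. int M. of_real (g k) * Ef t k)"

definition vanish :: "nat \<Rightarrow> (int \<Rightarrow> real) \<Rightarrow> bool" where
  "vanish R g \<longleftrightarrow> (\<forall>k. \<bar>k\<bar> > int R \<longrightarrow> g k = 0)"

lemma Tr_mono:
  assumes "vanish R g" "R \<le> M"
  shows "Tr M g t = Tr R g t"
  unfolding Tr_def
  by (rule sum.mono_neutral_right) (use assms in \<open>auto simp: vanish_def\<close>)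

lemma Tr_shift:
  assumes "vanish R g" "int R + \<bar>s\<bar> \<le> int M"
  shows "Tr M (\<lambda>k. g (k + s)) t = Ef t (- s) * Tr R g t"
proof -
  define F where "F l = of_real (g l) * Ef t (l - s)" for l
  have "Tr M (\<lambda>k. g (k + s)) t = (\<Sum>k = - int M .. int M. F (k + s))"
    unfolding Tr_def F_def by simp
  also have "\<dots> = (\<Sum>l = - int M + s .. int M + s. F l)"
    by (rule sum.reindex_bij_witness[of _ "\<lambda>l. l - s" "\<lambda>k. k + s"]) auto
  also have "\<dots> = (\<Sum>l = - int R .. int R. F l)"
  proof (rule sum.mono_neutral_right)
    have "-int M + s \<le> - int R" "int R \<le> int M + s" using assms(2) by arith+
    then show "{- int R .. int R} \<subseteq> {- int M + s .. int M + s}" by auto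
    show "\<forall>x\<in>{- int M + s..int M + s} - {- int R..int R}. F x = 0"
    proof
      fix x assume "x \<in> {- int M + s..int M + s} - {- int R..int R}"
      then have "\<bar>x\<bar> > int R" by auto
      then show "F x = 0" using assms(1) by (simp add: vanish_def F_def)
    qed
  qed simp
  also have "\<dots> = Ef t (- s) * Tr R g t"
    unfolding Tr_def F_def sum_distrib_left
    by (intro sum.cong refl) (simp add: Ef_mult)
  finally show ?thesis .
qed

lemma vanish_conv:
  assumes "vanish R g"
  shows "vanish (R + n) (conv n u g)"
  unfolding vanish_def conv_def
proof (intro allI impI)
  fix k assume k: "int (R + n) < \<bar>k\<bar>"
  have "g (k - j) = 0" if "j \<in> {- int n .. int n}" for j
    using assms that k unfolding vanish_def by auto
  then show "(\<Sum>j = - int n..int n. u j * g (k - j)) = 0" by simp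
qed

lemma Tr_conv:
  assumes "vanish R g" "R + n \<le> M"
  shows "Tr M (conv n u g) t = (\<Sum>j = - int n .. int n. of_real (u j) * Ef t j) * Tr R g t"
proof -
  have "Tr M (conv n u g) t = (\<Sum>j = - int n .. int n. of_real (u j) * Tr M (\<lambda>k. g (k + (- j))) t)"
  proof -
    have "Tr M (conv n u g) t = (\<Sum>k = - int M .. int M. \<Sum>j = - int n .. int n. of_real (u j) * (of_real (g (k + - j)) * Ef t k))"
      unfolding Tr_def conv_def by (simp add: sum_distrib_right mult.assoc)
    also have "\<dots> = (\<Sum>j = - int n .. int n. \<Sum>k = - int M .. int M. of_real (u j) * (of_real (g (k + - j)) * Ef t k))"
      by (rule sum.swap)
    also have "\<dots> = (\<Sum>j = - int n .. int n. of_real (u j) * Tr M (\<lambda>k. g (k + (- j))) t)"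
      unfolding Tr_def by (simp only: sum_distrib_left)
    finally show ?thesis .
  qed
  also have "\<dots> = (\<Sum>j = - int n .. int n. of_real (u j) * (Ef t j * Tr R g t))"
    by (intro sum.cong refl) (subst Tr_shift[OF assms(1)], use assms in auto)
  finally show ?thesis by (simp add: sum_distrib_right mult.assoc)
qed

lemma vanish_nabla4:
  assumes "vanish R g"
  shows "vanish (R + 4) (nabla_pow 4 g)"
  using assms unfolding vanish_def nabla4 by auto

lemma Tr_add: "Tr M (\<lambda>k. f k + g k) t = Tr M f t + Tr M g t"
  unfolding Tr_def by (simp add: sum.distrib distrib_right)

lemma Tr_diff: "Tr M (\<lambda>k. f k - g k) t = Tr M f t - Tr M g t"
  unfolding Tr_def by (simp add: sum_subtractf left_diff_distrib)

lemma Tr_scale: "Tr M (\<lambda>k. c * f k) t = of_real c * Tr M f t"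
  unfolding Tr_def by (simp add: sum_distrib_left mult.assoc)

lemma binom4: "(w - 1) ^ 4 = w ^ 4 - 4 * w ^ 3 + 6 * w ^ 2 - 4 * w + (1::complex)"
  by (simp add: eval_nat_numeral algebra_simps)

lemma Tr_nabla4:
  assumes "vanish R g" "R + 4 \<le> M"
  shows "Tr M (nabla_pow 4 g) t = (Ef t (-1) - 1) ^ 4 * Tr R g t"
proof -
  have nf: "nabla_pow 4 g = (\<lambda>k. g (k + 4) - 4 * g (k + 3) + 6 * g (k + 2) - 4 * g (k + 1) + g k)"
    by (rule ext) (rule nabla4)
  have "Tr M (nabla_pow 4 g) t = Tr M (\<lambda>k. g (k + 4)) t - 4 * Tr M (\<lambda>k. g (k + 3)) t
      + 6 * Tr M (\<lambda>k. g (k + 2)) t - 4 * Tr M (\<lambda>k. g (k + 1)) t + Tr M g t"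
    unfolding nf by (simp only: Tr_add Tr_diff Tr_scale) simp
  also have "\<dots> = (Ef t (-4) - 4 * Ef t (-3) + 6 * Ef t (-2) - 4 * Ef t (-1) + 1) * Tr R g t"
  proof -
    have s4: "Tr M (\<lambda>k. g (k + 4)) t = Ef t (-4) * Tr R g t" by (rule Tr_shift[OF assms(1)]) (use assms(2) in simp)
    have s3: "Tr M (\<lambda>k. g (k + 3)) t = Ef t (-3) * Tr R g t" by (rule Tr_shift[OF assms(1)]) (use assms(2) in simp)
    have s2: "Tr M (\<lambda>k. g (k + 2)) t = Ef t (-2) * Tr R g t" by (rule Tr_shift[OF assms(1)]) (use assms(2) in simp)
    have s1: "Tr M (\<lambda>k. g (k + 1)) t = Ef t (-1) * Tr R g t" by (rule Tr_shift[OF assms(1)]) (use assms(2) in simp)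
    have s0: "Tr M g t = Tr R g t" by (rule Tr_mono[OF assms(1)]) (use assms(2) in simp)
    show ?thesis unfolding s4 s3 s2 s1 s0 by (simp only: ring_distribs mult_1_left mult.assoc)
  qed
  also have "Ef t (-4) - 4 * Ef t (-3) + 6 * Ef t (-2) - 4 * Ef t (-1) + 1 = (Ef t (-1) - 1) ^ 4"
  proof -
    have e2: "Ef t (-2) = Ef t (-1) ^ 2" using Ef_mult[of t "-1" "-1"] by (simp add: power2_eq_square)
    have e3: "Ef t (-3) = Ef t (-1) ^ 3" using Ef_mult[of t "-2" "-1"] e2 by (simp add: power3_eq_cube power2_eq_square)
    have e4: "Ef t (-4) = Ef t (-1) ^ 4" using Ef_mult[of t "-2" "-2"] e2 by (simp add: power2_eq_square power4_eq_xxxx mult.assoc)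
    show ?thesis unfolding e2 e3 e4 binom4 ..
  qed
  finally show ?thesis .
qed

definition Aop :: "nat \<Rightarrow> (int \<Rightarrow> real) \<Rightarrow> (int \<Rightarrow> real) \<Rightarrow> int \<Rightarrow> real" where
  "Aop n u f = nabla_pow 4 (conv n u f)"

definition msym :: "nat \<Rightarrow> (int \<Rightarrow> real) \<Rightarrow> real \<Rightarrow> real" where
  "msym n u t = 4 * (1 - cos t)\<^sup>2 * poly (upoly n u) (cos t)"

lemma vanish_Aop: "vanish R g \<Longrightarrow> vanish (R + n + 4) (Aop n u g)"
  unfolding Aop_def by (intro vanish_nabla4 vanish_conv)

lemma Tr_Aop:
  assumes "vanish R g"
  shows "Tr (R + n + 4) (Aop n u g) t = (Ef t (-1) - 1) ^ 4 * (\<Sum>j = - int n .. int n. of_real (u j) * Ef t j) * Tr R g t"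
proof -
  have "Tr (R + n + 4) (Aop n u g) t = (Ef t (-1) - 1) ^ 4 * Tr (R + n) (conv n u g) t"
    unfolding Aop_def by (rule Tr_nabla4[OF vanish_conv[OF assms]]) simp
  also have "Tr (R + n) (conv n u g) t = (\<Sum>j = - int n .. int n. of_real (u j) * Ef t j) * Tr R g t"
    by (rule Tr_conv[OF assms]) simp
  finally show ?thesis by (simp add: mult.assoc)
qed

lemma cmod_Ef1: "(cmod (Ef t (-1) - 1))\<^sup>2 = 2 - 2 * cos t"
proof -
  have "Ef t (-1) = cis (-t)" by (simp add: Ef_def cis_conv_exp)
  then have "(cmod (Ef t (-1) - 1))\<^sup>2 = (cos t - 1)\<^sup>2 + (sin t)\<^sup>2"
    by (simp add: cmod_power2)
  also have "\<dots> = 2 - 2 * cos t"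
    using sin_cos_squared_add[of t] by (simp add: power2_eq_square algebra_simps)
  finally show ?thesis .
qed

lemma symbol_norm:
  assumes sym: "\<And>j. u j = u (- j)" and pos: "\<And>\<xi>. fourier n u \<xi> \<in> \<real>\<^sub>\<ge>\<^sub>0"
  shows "cmod ((Ef t (-1) - 1) ^ 4 * (\<Sum>j = - int n .. int n. of_real (u j) * Ef t j)) = msym n u t"
proof -
  have "(\<Sum>j = - int n .. int n. of_real (u j) * Ef t j) = fourier n u (- t)"
    unfolding fourier_def Ef_def by (intro sum.cong refl) (simp add: algebra_simps)
  also have "\<dots> = of_real (poly (upoly n u) (cos t))"
    using fourier_upoly[of u n "-t", OF sym] by simp
  finally have e: "(\<Sum>j = - int n .. int n. of_real (u j) * Ef t j) = of_real (poly (upoly n u) (cos t))" .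
  have p: "poly (upoly n u) (cos t) \<ge> 0"
    by (rule upoly_nonneg[OF sym pos]) auto
  have "cmod ((Ef t (-1) - 1) ^ 4) = ((cmod (Ef t (-1) - 1))\<^sup>2)\<^sup>2"
    by (simp add: norm_power power_mult[symmetric])
  also have "\<dots> = 4 * (1 - cos t)\<^sup>2" unfolding cmod_Ef1 by (simp add: power2_eq_square algebra_simps)
  finally show ?thesis using p unfolding e msym_def by (simp add: norm_mult)
qed

lemma msym_nonneg:
  assumes sym: "\<And>j. u j = u (- j)" and pos: "\<And>\<xi>. fourier n u \<xi> \<in> \<real>\<^sub>\<ge>\<^sub>0"
  shows "msym n u t \<ge> 0"
  using upoly_nonneg[OF sym pos, of "cos t"] unfolding msym_def by simp

lemma Aop_finite_bound:
  assumes sym: "\<And>j. u j = u (- j)" and pos: "\<And>\<xi>. fourier n u \<xi> \<in> \<real>\<^sub>\<ge>\<^sub>0"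
    and B: "\<And>t. msym n u t \<le> B" and g: "vanish R g"
  shows "(\<Sum>k = - int (R + n + 4) .. int (R + n + 4). (Aop n u g k)\<^sup>2) \<le> B\<^sup>2 * (\<Sum>k = - int R .. int R. (g k)\<^sup>2)"
proof -
  define M where "M = R + n + 4"
  have i1: "((\<lambda>t. (cmod (Tr M (Aop n u g) t))\<^sup>2) has_integral (2 * pi * (\<Sum>k = - int M .. int M. (Aop n u g k)\<^sup>2))) {0 .. 2*pi}"
    unfolding Tr_def by (rule parseval) simp
  have i2: "((\<lambda>t. B\<^sup>2 * (cmod (Tr R g t))\<^sup>2) has_integral (B\<^sup>2 * (2 * pi * (\<Sum>k = - int R .. int R. (g k)\<^sup>2)))) {0 .. 2*pi}"
    unfolding Tr_def by (intro has_integral_mult_right parseval) simp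
  have le: "(cmod (Tr M (Aop n u g) t))\<^sup>2 \<le> B\<^sup>2 * (cmod (Tr R g t))\<^sup>2" for t
  proof -
    have "cmod (Tr M (Aop n u g) t) = msym n u t * cmod (Tr R g t)"
      unfolding M_def Tr_Aop[OF g] using symbol_norm[OF sym pos, of t] by (simp add: norm_mult)
    moreover have "0 \<le> msym n u t" by (rule msym_nonneg[OF sym pos])
    ultimately show ?thesis using B[of t]
      by (simp add: power_mult_distrib mult_right_mono power_mono)
  qed
  have "2 * pi * (\<Sum>k = - int M .. int M. (Aop n u g k)\<^sup>2) \<le> B\<^sup>2 * (2 * pi * (\<Sum>k = - int R .. int R. (g k)\<^sup>2))"
    by (rule has_integral_le[OF i1 i2]) (use le in auto)
  then show ?thesis unfolding M_def by (simp add: algebra_simps)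
qed

lemma Aop_local:
  assumes "\<And>m. k - int n \<le> m \<Longrightarrow> m \<le> k + 4 + int n \<Longrightarrow> f m = g m"
  shows "Aop n u f k = Aop n u g k"
proof -
  have c: "conv n u f (k + i) = conv n u g (k + i)" if "0 \<le> i" "i \<le> 4" for i
    unfolding conv_def by (intro sum.cong refl) (use assms that in auto)
  show ?thesis unfolding Aop_def nabla4 using c[of 0] c[of 1] c[of 2] c[of 3] c[of 4] by simp
qed

lemma Aop_l2_bound:
  assumes sym: "\<And>j. u j = u (- j)" and pos: "\<And>\<xi>. fourier n u \<xi> \<in> \<real>\<^sub>\<ge>\<^sub>0"
    and B: "\<And>t. msym n u t \<le> B" and f: "in_l2 f"
  shows "in_l2 (Aop n u f) \<and> l2norm (Aop n u f) \<le> B * l2norm f"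
proof -
  define S where "S = (\<Sum>\<^sub>\<infinity>k. (f k)\<^sup>2)"
  have fs: "(\<lambda>k. (f k)\<^sup>2) summable_on UNIV" using f by (simp add: in_l2_def)
  have B0: "0 \<le> B" using msym_nonneg[OF sym pos, of 0] B[of 0] by linarith
  have fin: "(\<Sum>k\<in>F. (Aop n u f k)\<^sup>2) \<le> B\<^sup>2 * S" if F: "finite F" for F
  proof -
    obtain Rf :: nat where Rf: "\<And>k. k \<in> F \<Longrightarrow> \<bar>k\<bar> \<le> int Rf"
    proof
      fix k assume "k \<in> F"
      then have "\<bar>k\<bar> \<le> Max (abs ` F)" using F by (intro Max_ge) auto
      also have "\<dots> \<le> int (nat (Max (abs ` F)))" by simp
      finally show "\<bar>k\<bar> \<le> int (nat (Max (abs ` F)))" .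
    qed
    define R where "R = Rf + n + 4"
    define g where "g k = (if \<bar>k\<bar> \<le> int R then f k else 0)" for k
    have vg: "vanish R g" by (simp add: vanish_def g_def)
    have eq: "Aop n u f k = Aop n u g k" if "k \<in> F" for k
      by (rule Aop_local) (use Rf[OF that] in \<open>auto simp: g_def R_def\<close>)
    have "(\<Sum>k\<in>F. (Aop n u f k)\<^sup>2) = (\<Sum>k\<in>F. (Aop n u g k)\<^sup>2)" using eq by simp
    also have "\<dots> \<le> (\<Sum>k = - int (R + n + 4) .. int (R + n + 4). (Aop n u g k)\<^sup>2)"
    proof -
      have "(\<Sum>k\<in>F. (Aop n u g k)\<^sup>2) = (\<Sum>k\<in>F \<inter> {- int (R + n + 4) .. int (R + n + 4)}. (Aop n u g k)\<^sup>2)"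
      proof (rule sum.mono_neutral_right)
        show "\<forall>k\<in>F - F \<inter> {- int (R + n + 4)..int (R + n + 4)}. (Aop n u g k)\<^sup>2 = 0"
        proof
          fix k assume "k \<in> F - F \<inter> {- int (R + n + 4)..int (R + n + 4)}"
          then have "\<bar>k\<bar> > int (R + n + 4)" by auto
          then show "(Aop n u g k)\<^sup>2 = 0" using vanish_Aop[OF vg, of n u] unfolding vanish_def by simp
        qed
      qed (use F in auto)
      also have "\<dots> \<le> (\<Sum>k = - int (R + n + 4) .. int (R + n + 4). (Aop n u g k)\<^sup>2)"
        by (rule sum_mono2) auto
      finally show ?thesis .
    qed
    also have "\<dots> \<le> B\<^sup>2 * (\<Sum>k = - int R .. int R. (g k)\<^sup>2)"
      by (rule Aop_finite_bound[OF sym pos B vg])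
    also have "(\<Sum>k = - int R .. int R. (g k)\<^sup>2) = (\<Sum>k = - int R .. int R. (f k)\<^sup>2)"
      by (intro sum.cong refl) (auto simp: g_def)
    also have "\<dots> \<le> S"
      unfolding S_def by (rule finite_sum_le_infsum[OF fs]) auto
    finally show ?thesis by (simp add: mult_left_mono)
  qed
  have sA: "(\<lambda>k. (Aop n u f k)\<^sup>2) summable_on UNIV"
    by (rule nonneg_bdd_above_summable_on) (use fin in \<open>auto intro!: bdd_aboveI[of _ "B\<^sup>2 * S"]\<close>)
  have iA: "(\<Sum>\<^sub>\<infinity>k. (Aop n u f k)\<^sup>2) \<le> B\<^sup>2 * S"
    by (rule infsum_le_finite_sums[OF sA]) (use fin in auto)
  have "l2norm (Aop n u f) \<le> sqrt (B\<^sup>2 * S)"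
    unfolding l2norm_def using iA by simp
  also have "\<dots> = B * l2norm f"
    using B0 by (simp add: l2norm_def S_def real_sqrt_mult)
  finally show ?thesis using sA by (simp add: in_l2_def)
qed

lemma Ef_cis: "Ef t k = cis (of_int k * t)"
  by (simp add: Ef_def cis_conv_exp mult.assoc)

lemma norm_Ef[simp]: "cmod (Ef t k) = 1"
  by (simp add: Ef_cis)

lemma Re_Ef: "Re (Ef t k) = cos (of_int k * t)"
  by (simp add: Ef_cis)

lemma Ef_nat: "Ef t (int i) = Ef t 1 ^ i"
proof (induction i)
  case 0 then show ?case by (simp add: Ef_def)
next
  case (Suc i)
  have "Ef t (int (Suc i)) = Ef t (int i) * Ef t 1" by (simp add: Ef_mult add.commute)
  then show ?case using Suc by simp
qed

lemma geo_bound: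
  fixes q :: complex
  assumes "cmod q = 1" "q \<noteq> 1"
  shows "cmod (\<Sum>i = a..b. q ^ i) \<le> 2 / cmod (1 - q)"
proof (cases "a \<le> b")
  case True
  have "(1 - q) * (\<Sum>i = a..b. q ^ i) = q ^ a - q ^ Suc b" by (rule sum_gp_multiplied[OF True])
  then have "cmod (1 - q) * cmod (\<Sum>i = a..b. q ^ i) = cmod (q ^ a - q ^ Suc b)"
    by (metis norm_mult)
  also have "\<dots> \<le> cmod (q ^ a) + cmod (q ^ Suc b)" by (rule norm_triangle_ineq4)
  also have "\<dots> = 2" using assms(1) by (simp only: norm_power) simp
  finally have "cmod (1 - q) * cmod (\<Sum>i = a..b. q ^ i) \<le> 2" .
  moreover have "cmod (1 - q) > 0" using assms(2) by simp
  ultimately show ?thesis by (simp add: field_simps)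
next
  case False
  then show ?thesis by simp
qed

lemma re_sq: "(Re w)\<^sup>2 = ((cmod w)\<^sup>2 + Re (w\<^sup>2)) / 2"
proof -
  have "(cmod w)\<^sup>2 = (Re w)\<^sup>2 + (Im w)\<^sup>2" by (rule cmod_power2)
  moreover have "Re (w\<^sup>2) = (Re w)\<^sup>2 - (Im w)\<^sup>2" by (simp add: power2_eq_square)
  ultimately show ?thesis by simp
qed

lemma l2_vanish:
  assumes "vanish R g"
  shows "in_l2 g \<and> l2norm g = sqrt (\<Sum>k = - int R .. int R. (g k)\<^sup>2)"
proof -
  have z: "\<And>k. k \<in> UNIV - {- int R .. int R} \<Longrightarrow> (g k)\<^sup>2 = 0"
    using assms by (auto simp: vanish_def)
  have "(\<lambda>k. (g k)\<^sup>2) summable_on UNIV \<longleftrightarrow> (\<lambda>k. (g k)\<^sup>2) summable_on {- int R .. int R}"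
    by (rule summable_on_cong_neutral) (use z in auto)
  moreover have "(\<Sum>\<^sub>\<infinity>k. (g k)\<^sup>2) = (\<Sum>\<^sub>\<infinity>k\<in>{- int R .. int R}. (g k)\<^sup>2)"
    by (rule infsum_cong_neutral) (use z in auto)
  ultimately show ?thesis by (simp add: in_l2_def l2norm_def)
qed

lemma Aop_cos:
  "Aop n u (\<lambda>k. cos (of_int k * t)) k
     = Re (Ef t k * ((Ef t 1 - 1) ^ 4 * (\<Sum>j = - int n .. int n. of_real (u j) * Ef t (- j))))"
proof -
  define W where "W = (\<Sum>j = - int n .. int n. of_real (u j) * Ef t (- j))"
  have cv: "conv n u (\<lambda>k. cos (of_int k * t)) k = Re (Ef t k * W)" for k
  proof -
    have "conv n u (\<lambda>k. cos (of_int k * t)) k = (\<Sum>j = - int n .. int n. u j * Re (Ef t (k - j)))"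
      unfolding conv_def Re_Ef by simp
    also have "\<dots> = Re (Ef t k * W)"
      unfolding W_def sum_distrib_left Re_sum
    proof (intro sum.cong refl)
      fix j
      have "Ef t k * (of_real (u j) * Ef t (- j)) = of_real (u j) * (Ef t k * Ef t (- j))"
        by (rule mult.left_commute)
      also have "\<dots> = of_real (u j) * Ef t (k - j)" by (simp add: Ef_mult)
      finally have h: "Ef t k * (of_real (u j) * Ef t (- j)) = of_real (u j) * Ef t (k - j)" .
      show "u j * Re (Ef t (k - j)) = Re (Ef t k * (of_real (u j) * Ef t (- j)))" unfolding h by simp
    qed
    finally show ?thesis .
  qed
  have e: "Ef t (k + i) = Ef t k * Ef t 1 ^ nat i" if "i \<ge> 0" for i
    using Ef_mult[of t k i] Ef_nat[of t "nat i"] that by simp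
  have "Aop n u (\<lambda>k. cos (of_int k * t)) k
     = Re (Ef t (k + 4) * W) - 4 * Re (Ef t (k + 3) * W) + 6 * Re (Ef t (k + 2) * W) - 4 * Re (Ef t (k + 1) * W) + Re (Ef t k * W)"
    unfolding Aop_def nabla4 cv by simp
  also have "\<dots> = Re (Ef t (k + 4) * W - 4 * (Ef t (k + 3) * W) + 6 * (Ef t (k + 2) * W) - 4 * (Ef t (k + 1) * W) + Ef t k * W)"
    by simp
  also have "Ef t (k + 4) * W - 4 * (Ef t (k + 3) * W) + 6 * (Ef t (k + 2) * W) - 4 * (Ef t (k + 1) * W) + Ef t k * W
      = Ef t k * ((Ef t 1 - 1) ^ 4 * W)"
    unfolding binom4 using e[of 4] e[of 3] e[of 2] e[of 1] by (simp add: algebra_simps)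
  finally show ?thesis unfolding W_def .
qed

lemma Z_norm:
  assumes sym: "\<And>j. u j = u (- j)" and pos: "\<And>\<xi>. fourier n u \<xi> \<in> \<real>\<^sub>\<ge>\<^sub>0"
  shows "cmod ((Ef t 1 - 1) ^ 4 * (\<Sum>j = - int n .. int n. of_real (u j) * Ef t (- j))) = msym n u t"
proof -
  have "Ef t 1 = Ef (- t) (-1)" "\<And>j. Ef t (- j) = Ef (- t) j" by (simp_all add: Ef_def)
  then have "cmod ((Ef t 1 - 1) ^ 4 * (\<Sum>j = - int n .. int n. of_real (u j) * Ef t (- j))) = msym n u (- t)"
    using symbol_norm[OF sym pos, of "- t"] by simp
  then show ?thesis by (simp add: msym_def)
qed

definition fN :: "nat \<Rightarrow> real \<Rightarrow> int \<Rightarrow> real" where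
  "fN N t k = (if 0 \<le> k \<and> k < int N then cos (of_int k * t) else 0)"

lemma vanish_fN: "vanish N (fN N t)"
  by (simp add: vanish_def fN_def)

lemma Ef_sq: "(Ef t (int i))\<^sup>2 = (Ef t 1 ^ 2) ^ i"
  by (simp add: Ef_nat power_mult[symmetric] mult.commute)

lemma sum_cos_sq:
  assumes q: "q = Ef t 1 ^ 2"
  shows "(\<Sum>i = a..b. (cos (real i * t))\<^sup>2) = (real (card {a..b}) + Re (\<Sum>i = a..b. q ^ i)) / 2"
proof -
  have cs: "(cos (real i * t))\<^sup>2 = (1 + Re (q ^ i)) / 2" for i
  proof -
    have "(cos (real i * t))\<^sup>2 = (Re (Ef t (int i)))\<^sup>2" by (simp add: Re_Ef)
    also have "\<dots> = (1 + Re (q ^ i)) / 2" unfolding re_sq Ef_sq q by simp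
    finally show ?thesis .
  qed
  have "(\<Sum>i = a..b. (cos (real i * t))\<^sup>2) = (\<Sum>i = a..b. (1 + Re (q ^ i)) / 2)"
    by (rule sum.cong[OF refl]) (rule cs)
  also have "\<dots> = (real (card {a..b}) + Re (\<Sum>i = a..b. q ^ i)) / 2"
    by (simp add: sum_divide_distrib[symmetric] sum.distrib)
  finally show ?thesis .
qed

lemma q_props:
  assumes "sin t \<noteq> 0"
  shows "cmod (Ef t 1 ^ 2) = 1" "Ef t 1 ^ 2 \<noteq> 1"
proof -
  show "cmod (Ef t 1 ^ 2) = 1" by (simp only: norm_power norm_Ef power_one)
  have e: "Ef t 1 ^ 2 = cis (2 * t)" using Ef_nat[of t 2] Ef_cis[of t 2] by simp
  show "Ef t 1 ^ 2 \<noteq> 1"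
  proof
    assume "Ef t 1 ^ 2 = 1"
    then have c1: "cis (2 * t) = 1" unfolding e .
    have "sin (2 * t) = Im (cis (2 * t))" by simp
    then have s0: "sin (2 * t) = 0" unfolding c1 by simp
    have "cos (2 * t) = Re (cis (2 * t))" by simp
    then have c0: "cos (2 * t) = 1" unfolding c1 by simp
    have "2 * sin t * cos t = 0" using s0 sin_double[of t] by simp
    then have "cos t = 0" using assms by simp
    then have "cos (2 * t) = -1" using cos_double_cos[of t] by simp
    then show False using c0 by simp
  qed
qed

lemma fN_norm:
  assumes "sin t \<noteq> 0" "N \<ge> 1"
  defines "G \<equiv> 2 / cmod (1 - Ef t 1 ^ 2)"
  shows "in_l2 (fN N t)" "(l2norm (fN N t))\<^sup>2 \<le> (real N + G) / 2" "l2norm (fN N t) > 0"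
proof -
  have l: "in_l2 (fN N t) \<and> l2norm (fN N t) = sqrt (\<Sum>k = - int N .. int N. (fN N t k)\<^sup>2)"
    by (rule l2_vanish[OF vanish_fN])
  then show "in_l2 (fN N t)" by simp
  have "(\<Sum>k = - int N .. int N. (fN N t k)\<^sup>2) = (\<Sum>k\<in>int ` {0..N-1}. (fN N t k)\<^sup>2)"
  proof (rule sum.mono_neutral_right)
    show "int ` {0..N - 1} \<subseteq> {- int N..int N}" by auto
    show "\<forall>i\<in>{- int N..int N} - int ` {0..N - 1}. (fN N t i)\<^sup>2 = 0"
    proof
      fix i assume i: "i \<in> {- int N..int N} - int ` {0..N - 1}"
      have "\<not> (0 \<le> i \<and> i < int N)"
      proof
        assume "0 \<le> i \<and> i < int N"
        then have "i = int (nat i)" "nat i \<in> {0..N-1}" by auto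
        then show False using i by blast
      qed
      then show "(fN N t i)\<^sup>2 = 0" unfolding fN_def by auto
    qed
  qed simp
  also have "\<dots> = (\<Sum>i = 0..N-1. (fN N t (int i))\<^sup>2)"
    by (subst sum.reindex) (simp_all add: inj_on_def)
  also have "\<dots> = (\<Sum>i = 0..N-1. (cos (real i * t))\<^sup>2)"
  proof (rule sum.cong[OF refl])
    fix i assume "i \<in> {0..N-1}"
    then have "0 \<le> int i" "int i < int N" using assms(2) by auto
    then show "(fN N t (int i))\<^sup>2 = (cos (real i * t))\<^sup>2" by (simp add: fN_def)
  qed
  also have "\<dots> = (real (card {0..N-1}) + Re (\<Sum>i = 0..N-1. (Ef t 1 ^ 2) ^ i)) / 2"
    by (rule sum_cos_sq) simp
  finally have S: "(\<Sum>k = - int N .. int N. (fN N t k)\<^sup>2) = (real N + Re (\<Sum>i = 0..N-1. (Ef t 1 ^ 2) ^ i)) / 2"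
    using assms(2) by simp
  have "Re (\<Sum>i = 0..N-1. (Ef t 1 ^ 2) ^ i) \<le> G"
  proof -
    have "Re (\<Sum>i = 0..N-1. (Ef t 1 ^ 2) ^ i) \<le> cmod (\<Sum>i = 0..N-1. (Ef t 1 ^ 2) ^ i)"
      by (rule complex_Re_le_cmod)
    moreover have "cmod (\<Sum>i = 0..N-1. (Ef t 1 ^ 2) ^ i) \<le> G"
      unfolding G_def by (rule geo_bound[OF q_props[OF assms(1)]])
    ultimately show ?thesis by linarith
  qed
  then have S2: "(\<Sum>k = - int N .. int N. (fN N t k)\<^sup>2) \<le> (real N + G) / 2" unfolding S by simp
  have nn: "0 \<le> (\<Sum>k = - int N .. int N. (fN N t k)\<^sup>2)" by (intro sum_nonneg) simp
  show "(l2norm (fN N t))\<^sup>2 \<le> (real N + G) / 2" using l S2 nn by simp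
  have "(fN N t 0)\<^sup>2 \<le> (\<Sum>k = - int N .. int N. (fN N t k)\<^sup>2)"
    by (rule member_le_sum) auto
  then have "1 \<le> (\<Sum>k = - int N .. int N. (fN N t k)\<^sup>2)" using assms(2) by (simp add: fN_def)
  then show "l2norm (fN N t) > 0" using l by simp
qed

lemma AfN_lower:
  assumes sym: "\<And>j. u j = u (- j)" and pos: "\<And>\<xi>. fourier n u \<xi> \<in> \<real>\<^sub>\<ge>\<^sub>0"
    and st: "sin t \<noteq> 0" and N: "N \<ge> 2 * n + 5"
  defines "G \<equiv> 2 / cmod (1 - Ef t 1 ^ 2)"
  shows "(real N - real (2 * n + 4) - G) * (msym n u t)\<^sup>2 / 2 \<le> (l2norm (Aop n u (fN N t)))\<^sup>2"
proof -
  define s where "s = msym n u t"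
  define Z where "Z = (Ef t 1 - 1) ^ 4 * (\<Sum>j = - int n .. int n. of_real (u j) * Ef t (- j))"
  define q where "q = Ef t 1 ^ 2"
  define R' where "R' = N + n + 4"
  have Zs: "cmod Z = s" unfolding Z_def s_def by (rule Z_norm[OF sym pos])
  have l: "in_l2 (Aop n u (fN N t)) \<and> l2norm (Aop n u (fN N t)) = sqrt (\<Sum>k = - int R' .. int R'. (Aop n u (fN N t) k)\<^sup>2)"
    unfolding R'_def by (rule l2_vanish[OF vanish_Aop[OF vanish_fN]])
  have nn: "0 \<le> (\<Sum>k = - int R' .. int R'. (Aop n u (fN N t) k)\<^sup>2)" by (intro sum_nonneg) simp
  have "(\<Sum>k\<in>int ` {n..N-5-n}. (Aop n u (fN N t) k)\<^sup>2) \<le> (\<Sum>k = - int R' .. int R'. (Aop n u (fN N t) k)\<^sup>2)"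
    by (rule sum_mono2) (auto simp: R'_def)
  also have "(\<Sum>k\<in>int ` {n..N-5-n}. (Aop n u (fN N t) k)\<^sup>2) = (\<Sum>i = n..N-5-n. (Aop n u (fN N t) (int i))\<^sup>2)"
    by (subst sum.reindex) (simp_all add: inj_on_def)
  also have "\<dots> = (\<Sum>i = n..N-5-n. (s\<^sup>2 + Re (Z\<^sup>2 * q ^ i)) / 2)"
  proof (rule sum.cong[OF refl])
    fix i assume i: "i \<in> {n..N-5-n}"
    have "Aop n u (fN N t) (int i) = Aop n u (\<lambda>k. cos (of_int k * t)) (int i)"
    proof (rule Aop_local)
      fix m assume "int i - int n \<le> m" "m \<le> int i + 4 + int n"
      then have "0 \<le> m" "m < int N" using i N by auto
      then show "fN N t m = cos (of_int m * t)" by (simp add: fN_def)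
    qed
    also have "\<dots> = Re (Ef t (int i) * Z)" unfolding Aop_cos Z_def ..
    finally have a: "Aop n u (fN N t) (int i) = Re (Ef t (int i) * Z)" .
    have "(Ef t (int i) * Z)\<^sup>2 = Z\<^sup>2 * q ^ i" using Ef_sq[of t i] unfolding q_def
      by (simp add: power_mult_distrib mult.commute)
    then show "(Aop n u (fN N t) (int i))\<^sup>2 = (s\<^sup>2 + Re (Z\<^sup>2 * q ^ i)) / 2"
      unfolding a re_sq by (simp add: norm_mult Zs)
  qed
  also have "\<dots> = (real (card {n..N-5-n}) * s\<^sup>2 + Re (Z\<^sup>2 * (\<Sum>i = n..N-5-n. q ^ i))) / 2"
    by (simp add: sum_divide_distrib[symmetric] sum.distrib sum_distrib_left)
  also have "card {n..N-5-n} = N - 4 - 2 * n" using N by simp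
  finally have A: "(real (N - 4 - 2 * n) * s\<^sup>2 + Re (Z\<^sup>2 * (\<Sum>i = n..N-5-n. q ^ i))) / 2
      \<le> (\<Sum>k = - int R' .. int R'. (Aop n u (fN N t) k)\<^sup>2)" .
  have "- Re (Z\<^sup>2 * (\<Sum>i = n..N-5-n. q ^ i)) \<le> cmod (Z\<^sup>2 * (\<Sum>i = n..N-5-n. q ^ i))"
    using abs_Re_le_cmod[of "Z\<^sup>2 * (\<Sum>i = n..N-5-n. q ^ i)"] by linarith
  also have "\<dots> = s\<^sup>2 * cmod (\<Sum>i = n..N-5-n. q ^ i)" by (simp add: norm_mult norm_power Zs)
  also have "\<dots> \<le> s\<^sup>2 * G" unfolding G_def q_def
    by (intro mult_left_mono geo_bound q_props[OF st]) simp
  finally have B: "- (s\<^sup>2 * G) \<le> Re (Z\<^sup>2 * (\<Sum>i = n..N-5-n. q ^ i))" by linarith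
  have "real (N - 4 - 2 * n) = real N - real (2 * n + 4)" using N by simp
  then have "(real N - real (2 * n + 4) - G) * s\<^sup>2 / 2 \<le> (\<Sum>k = - int R' .. int R'. (Aop n u (fN N t) k)\<^sup>2)"
    using A B by (simp add: algebra_simps)
  then show ?thesis using l nn unfolding s_def by simp
qed

lemma l2norm_zero_fun: "l2norm (\<lambda>_. 0) = 0"
  by (simp add: l2norm_def)

lemma l2norm_nonneg: "l2norm f \<ge> 0"
  unfolding l2norm_def by (simp add: infsum_nonneg)

lemma lower_ratio:
  assumes sym: "\<And>j. u j = u (- j)" and pos: "\<And>\<xi>. fourier n u \<xi> \<in> \<real>\<^sub>\<ge>\<^sub>0"
    and st: "sin t \<noteq> 0" and e: "\<epsilon> > 0"
  shows "\<exists>f. in_l2 f \<and> f \<noteq> (\<lambda>_. 0) \<and> msym n u t - \<epsilon> \<le> l2norm (Aop n u f) / l2norm f"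
proof -
  define s where "s = msym n u t"
  define G where "G = 2 / cmod (1 - Ef t 1 ^ 2)"
  have s0: "s \<ge> 0" unfolding s_def by (rule msym_nonneg[OF sym pos])
  have G0: "G > 0" unfolding G_def using q_props(2)[OF st] by simp
  have fprops: "in_l2 (fN N t) \<and> fN N t \<noteq> (\<lambda>_. 0) \<and> l2norm (fN N t) > 0 \<and> (l2norm (fN N t))\<^sup>2 \<le> (real N + G) / 2"
    if "N \<ge> 1" for N
    using fN_norm[OF st that] l2norm_zero_fun unfolding G_def by auto
  show ?thesis
  proof (cases "s \<le> \<epsilon>")
    case True
    have "0 \<le> l2norm (Aop n u (fN (2*n+5) t)) / l2norm (fN (2*n+5) t)" by (simp add: l2norm_nonneg)
    moreover have "in_l2 (fN (2*n+5) t) \<and> fN (2*n+5) t \<noteq> (\<lambda>_. 0)" using fprops[of "2*n+5"] by auto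
    ultimately show ?thesis using True unfolding s_def by (intro exI[of _ "fN (2*n+5) t"]) auto
  next
    case False
    then have se: "s > \<epsilon>" by simp
    define \<rho> where "\<rho> = ((s - \<epsilon>) / s)\<^sup>2"
    have \<rho>0: "0 \<le> \<rho>" unfolding \<rho>_def by simp
    have "(s - \<epsilon>) / s < 1" using se e by (simp add: field_simps)
    moreover have "0 \<le> (s - \<epsilon>) / s" using se e by simp
    ultimately have "(s - \<epsilon>) / s * ((s - \<epsilon>) / s) < 1 * 1"
      by (intro mult_strict_mono) auto
    then have \<rho>1: "\<rho> < 1" unfolding \<rho>_def by (simp add: power2_eq_square)
    define c0 where "c0 = real (2 * n + 4)"
    define N where "N = nat \<lceil>(c0 + 2 * G) / (1 - \<rho>)\<rceil> + 2 * n + 5"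
    have N5: "N \<ge> 2 * n + 5" unfolding N_def by simp
    have "(c0 + 2 * G) / (1 - \<rho>) \<le> real (nat \<lceil>(c0 + 2 * G) / (1 - \<rho>)\<rceil>)"
      by (rule real_nat_ceiling_ge)
    then have "real N \<ge> (c0 + 2 * G) / (1 - \<rho>)" unfolding N_def by simp
    then have k1: "(1 - \<rho>) * real N \<ge> c0 + 2 * G" using \<rho>1 by (simp add: field_simps)
    have k2: "\<rho> * G \<le> G" using mult_right_mono[of \<rho> 1 G] \<rho>1 G0 by simp
    have k3: "\<rho> * (real N + G) = \<rho> * real N + \<rho> * G" by (simp add: distrib_left)
    have k4: "(1 - \<rho>) * real N = real N - \<rho> * real N" by (simp add: left_diff_distrib)
    have key: "real N - c0 - G \<ge> \<rho> * (real N + G)" unfolding k3 using k1 k2 unfolding k4 by linarith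
    define a where "a = l2norm (Aop n u (fN N t))"
    define b where "b = l2norm (fN N t)"
    have fp: "in_l2 (fN N t)" "fN N t \<noteq> (\<lambda>_. 0)" "b > 0" "b\<^sup>2 \<le> (real N + G) / 2"
      using fprops[of N] N5 unfolding b_def by auto
    have a0: "a \<ge> 0" unfolding a_def by (rule l2norm_nonneg)
    have A: "(real N - c0 - G) * s\<^sup>2 / 2 \<le> a\<^sup>2"
      using AfN_lower[OF sym pos st N5] unfolding a_def c0_def s_def G_def .
    have "\<rho> * s\<^sup>2 = (s - \<epsilon>)\<^sup>2" unfolding \<rho>_def using se e by (simp add: field_simps power2_eq_square)
    have "((s - \<epsilon>) * b)\<^sup>2 = \<rho> * s\<^sup>2 * b\<^sup>2" using \<open>\<rho> * s\<^sup>2 = (s - \<epsilon>)\<^sup>2\<close> by (simp add: power_mult_distrib)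
    also have "\<dots> \<le> \<rho> * s\<^sup>2 * ((real N + G) / 2)"
      using fp(4) \<rho>0 by (intro mult_left_mono) auto
    also have "\<dots> = (\<rho> * (real N + G)) * s\<^sup>2 / 2" by simp
    also have "\<dots> \<le> (real N - c0 - G) * s\<^sup>2 / 2"
      using key by (intro divide_right_mono mult_right_mono) auto
    also have "\<dots> \<le> a\<^sup>2" by (rule A)
    finally have "(s - \<epsilon>) * b \<le> a" using a0 by (rule power2_le_imp_le)
    then have "s - \<epsilon> \<le> a / b" using fp(3) by (simp add: field_simps)
    then show ?thesis using fp unfolding a_def b_def s_def by blast
  qed
qed

lemma upoly_abs_bound:
  assumes "\<bar>x\<bar> \<le> 1"
  shows "\<bar>poly (upoly n u) x\<bar> \<le> \<bar>u 0\<bar> + (\<Sum>m = 1..n. 2 * \<bar>u (int m)\<bar>)"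
proof -
  have "\<bar>poly (upoly n u) x\<bar> \<le> \<bar>u 0\<bar> + \<bar>\<Sum>m = 1..n. 2 * u (int m) * cheb_T m x\<bar>"
    unfolding poly_upoly by (rule abs_triangle_ineq)
  also have "\<bar>\<Sum>m = 1..n. 2 * u (int m) * cheb_T m x\<bar> \<le> (\<Sum>m = 1..n. \<bar>2 * u (int m) * cheb_T m x\<bar>)"
    by (rule sum_abs)
  also have "\<dots> \<le> (\<Sum>m = 1..n. 2 * \<bar>u (int m)\<bar>)"
  proof (rule sum_mono)
    fix m
    have "\<bar>cheb_T m x\<bar> \<le> 1" by (rule cheb_T_bound[OF assms])
    then show "\<bar>2 * u (int m) * cheb_T m x\<bar> \<le> 2 * \<bar>u (int m)\<bar>"
      by (simp add: abs_mult mult_left_le)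
  qed
  finally show ?thesis by simp
qed

lemma msym_bound:
  assumes sym: "\<And>j. u j = u (- j)" and pos: "\<And>\<xi>. fourier n u \<xi> \<in> \<real>\<^sub>\<ge>\<^sub>0"
  shows "msym n u t \<le> 16 * (\<bar>u 0\<bar> + (\<Sum>m = 1..n. 2 * \<bar>u (int m)\<bar>))"
proof -
  define C where "C = \<bar>u 0\<bar> + (\<Sum>m = 1..n. 2 * \<bar>u (int m)\<bar>)"
  have P: "poly (upoly n u) (cos t) \<le> C" using upoly_abs_bound[of "cos t" n u] unfolding C_def by simp
  have P0: "poly (upoly n u) (cos t) \<ge> 0" by (rule upoly_nonneg[OF sym pos]) auto
  have "(1 - cos t)\<^sup>2 \<le> 2\<^sup>2" using cos_ge_minus_one[of t] cos_le_one[of t]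
    by (intro power_mono) auto
  then have "4 * (1 - cos t)\<^sup>2 \<le> 16" by simp
  then have "4 * (1 - cos t)\<^sup>2 * poly (upoly n u) (cos t) \<le> 16 * C"
    using P P0 by (intro mult_mono) auto
  then show ?thesis unfolding msym_def C_def .
qed

lemma msym_cont: "isCont (msym n u) t"
  unfolding msym_def by (intro continuous_intros)

lemma ratio_le:
  assumes sym: "\<And>j. u j = u (- j)" and pos: "\<And>\<xi>. fourier n u \<xi> \<in> \<real>\<^sub>\<ge>\<^sub>0"
    and B: "\<And>t. msym n u t \<le> B" and f: "in_l2 f"
  shows "l2norm (Aop n u f) / l2norm f \<le> B"
proof -
  have B0: "0 \<le> B" using msym_nonneg[OF sym pos, of 0] B[of 0] by linarith
  have le: "l2norm (Aop n u f) \<le> B * l2norm f" using Aop_l2_bound[OF sym pos B f] by blast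
  show ?thesis
  proof (cases "l2norm f = 0")
    case True then show ?thesis using B0 by simp
  next
    case False
    then have "l2norm f > 0" using l2norm_nonneg[of f] by linarith
    then show ?thesis using le by (simp add: divide_le_eq)
  qed
qed

definition f0 :: "int \<Rightarrow> real" where "f0 k = (if k = 0 then 1 else 0)"

lemma f0_props: "in_l2 f0" "f0 \<noteq> (\<lambda>_. 0)"
proof -
  have "vanish 0 f0" by (simp add: vanish_def f0_def)
  then show "in_l2 f0" using l2_vanish by blast
  show "f0 \<noteq> (\<lambda>_. 0)" by (metis f0_def one_neq_zero)
qed

lemma op_sup_props:
  assumes sym: "\<And>j. u j = u (- j)" and pos: "\<And>\<xi>. fourier n u \<xi> \<in> \<real>\<^sub>\<ge>\<^sub>0"
  shows "\<And>t. msym n u t \<le> op_sup n u"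
    and "\<And>B. (\<And>t. msym n u t \<le> B) \<Longrightarrow> op_sup n u \<le> B"
proof -
  define S where "S = {l2norm (nabla_pow 4 (conv n u f)) / l2norm f | f. in_l2 f \<and> f \<noteq> (\<lambda>_. 0)}"
  have os: "op_sup n u = Sup S" unfolding op_sup_def S_def ..
  have Sne: "S \<noteq> {}" unfolding S_def using f0_props by blast
  have Sle: "x \<le> B" if "x \<in> S" "\<And>t. msym n u t \<le> B" for x B
    using that ratio_le[OF sym pos] unfolding S_def Aop_def by blast
  have bdd: "bdd_above S"
    using Sle[OF _ msym_bound[OF sym pos]] by (intro bdd_aboveI) blast
  show "op_sup n u \<le> B" if "\<And>t. msym n u t \<le> B" for B
    unfolding os using Sne Sle that by (intro cSup_least) auto
  have gen: "msym n u t \<le> op_sup n u" if st: "sin t \<noteq> 0" for t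
  proof (rule field_le_epsilon)
    fix e :: real assume "0 < e"
    then obtain f where f: "in_l2 f" "f \<noteq> (\<lambda>_. 0)" "msym n u t - e \<le> l2norm (Aop n u f) / l2norm f"
      using lower_ratio[OF sym pos st] by blast
    have "l2norm (Aop n u f) / l2norm f \<in> S" unfolding S_def Aop_def using f by blast
    then have "l2norm (Aop n u f) / l2norm f \<le> op_sup n u" unfolding os using bdd by (rule cSup_upper)
    then show "msym n u t \<le> op_sup n u + e" using f(3) by linarith
  qed
  show "msym n u t \<le> op_sup n u" for t
  proof (cases "sin t = 0")
    case False then show ?thesis by (rule gen)
  next
    case True
    define h where "h k = inverse (real (Suc k))" for k
    have hlim: "(\<lambda>k. t + h k) \<longlonglongrightarrow> t"
      using tendsto_add[OF tendsto_const[of t] LIMSEQ_inverse_real_of_nat] unfolding h_def by simp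
    have "(\<lambda>k. msym n u (t + h k)) \<longlonglongrightarrow> msym n u t"
      by (rule isCont_tendsto_compose[OF msym_cont hlim])
    moreover have "msym n u (t + h k) \<le> op_sup n u" for k
    proof (rule gen)
      have h0: "0 < h k" "h k \<le> 1" unfolding h_def by (auto simp: field_simps)
      have "sin (h k) > 0" using h0 pi_gt3 by (intro sin_gt_zero) auto
      moreover have "cos t \<noteq> 0" using True sin_cos_squared_add[of t] by auto
      ultimately show "sin (t + h k) \<noteq> 0" using True by (simp add: sin_add)
    qed
    ultimately show ?thesis by (intro LIMSEQ_le_const2) auto
  qed
qed

lemma cheb_d1:
  "poly (pderiv (cheb_poly N)) (cos \<phi>) * sin \<phi> = real N * sin (real N * \<phi>)"
proof -
  have F: "(\<lambda>\<phi>. poly (cheb_poly N) (cos \<phi>)) = (\<lambda>\<phi>. cos (real N * \<phi>))"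
    by (rule ext) (simp add: cheb_T_cos)
  have d1: "DERIV (\<lambda>\<phi>. poly (cheb_poly N) (cos \<phi>)) \<phi> :> poly (pderiv (cheb_poly N)) (cos \<phi>) * (- sin \<phi>)"
    by (rule DERIV_chain2[OF poly_DERIV DERIV_cos])
  have d2: "DERIV (\<lambda>\<phi>. cos (real N * \<phi>)) \<phi> :> - sin (real N * \<phi>) * real N"
    by (auto intro!: derivative_eq_intros)
  have "poly (pderiv (cheb_poly N)) (cos \<phi>) * (- sin \<phi>) = - sin (real N * \<phi>) * real N"
    using DERIV_unique[OF d1[unfolded F] d2] .
  then show ?thesis by (simp add: algebra_simps)
qed

lemma cheb_d2:
  "poly (pderiv (cheb_poly N)) (cos \<phi>) * cos \<phi> - poly (pderiv (pderiv (cheb_poly N))) (cos \<phi>) * (sin \<phi>)\<^sup>2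
     = (real N)\<^sup>2 * cos (real N * \<phi>)"
proof -
  have F: "(\<lambda>\<phi>. poly (pderiv (cheb_poly N)) (cos \<phi>) * sin \<phi>) = (\<lambda>\<phi>. real N * sin (real N * \<phi>))"
    by (rule ext) (rule cheb_d1)
  have d1: "DERIV (\<lambda>\<phi>. poly (pderiv (cheb_poly N)) (cos \<phi>) * sin \<phi>) \<phi> :>
      poly (pderiv (pderiv (cheb_poly N))) (cos \<phi>) * (- sin \<phi>) * sin \<phi> + cos \<phi> * poly (pderiv (cheb_poly N)) (cos \<phi>)"
    by (rule DERIV_mult[OF DERIV_chain2[OF poly_DERIV DERIV_cos] DERIV_sin])
  have d2: "DERIV (\<lambda>\<phi>. real N * sin (real N * \<phi>)) \<phi> :> real N * (cos (real N * \<phi>) * real N)"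
    by (auto intro!: derivative_eq_intros)
  show ?thesis using DERIV_unique[OF d1[unfolded F] d2] by (simp add: power2_eq_square algebra_simps)
qed

lemma cheb_at_c:
  assumes N: "N \<ge> 2"
  defines "c \<equiv> cos (pi / real N)"
  shows "poly (pderiv (cheb_poly N)) c = 0"
    and "poly (pderiv (pderiv (cheb_poly N))) c = (real N)\<^sup>2 / (sin (pi / real N))\<^sup>2"
    and "cheb_T N c = -1"
proof -
  have Npos: "real N > 0" using N by simp
  have s0: "sin (pi / real N) > 0"
    using N by (intro sin_gt_zero) (auto simp: field_simps)
  have e: "real N * (pi / real N) = pi" using Npos by simp
  have "poly (pderiv (cheb_poly N)) c * sin (pi / real N) = 0"
    using cheb_d1[of N "pi / real N"] unfolding c_def e by simp
  then show T1: "poly (pderiv (cheb_poly N)) c = 0" using s0 by simp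
  have "- poly (pderiv (pderiv (cheb_poly N))) c * (sin (pi / real N))\<^sup>2 = - (real N)\<^sup>2"
    using cheb_d2[of N "pi / real N"] unfolding c_def e using T1[unfolded c_def] by simp
  then show "poly (pderiv (pderiv (cheb_poly N))) c = (real N)\<^sup>2 / (sin (pi / real N))\<^sup>2"
    using s0 by (simp add: field_simps)
  show "cheb_T N c = -1" unfolding c_def using cheb_T_cos[of N "pi / real N"] e by simp
qed

declare cheb_T.simps(3)[simp del] cheb_poly.simps(3)[simp del]

definition alp :: "nat \<Rightarrow> real" where "alp n = (1 + cos (pi / (real n + 2))) / 2"
definition QP :: "nat \<Rightarrow> real poly" where "QP n = pcompose (cheb_poly (n + 2)) [:alp n - 1, alp n:] + 1"
definition Kc :: "nat \<Rightarrow> real" where "Kc n = 8 / (real n + 2)\<^sup>2 * (tan (pi / (2 * real n + 4)))\<^sup>2"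

lemma poly_QP: "poly (QP n) x = 1 + cheb_T (n + 2) (alp n * (x + 1) - 1)"
proof -
  have "poly [:alp n - 1, alp n:] x = alp n * (x + 1) - 1" by (simp add: algebra_simps)
  then show ?thesis by (simp only: QP_def poly_add poly_pcompose poly_cheb_poly poly_1 add.commute)
qed

lemma alp_props: "0 < alp n" "alp n < 1" "2 * alp n - 1 = cos (pi / (real n + 2))"
proof -
  have p1: "0 < pi / (real n + 2)" by simp
  have "pi / (real n + 2) \<le> pi / 2" by (intro divide_left_mono) auto
  then have p: "0 < pi / (real n + 2)" "pi / (real n + 2) < pi" using p1 pi_gt_zero by linarith+
  have "cos (pi / (real n + 2)) > -1" using p cos_monotone_0_pi[of "pi / (real n + 2)" pi] by simp
  then show "0 < alp n" by (simp add: alp_def)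
  have "cos (pi / (real n + 2)) < 1" using p cos_monotone_0_pi[of 0 "pi / (real n + 2)"] by simp
  then show "alp n < 1" by (simp add: alp_def)
  show "2 * alp n - 1 = cos (pi / (real n + 2))" by (simp add: alp_def field_simps)
qed

lemma QP_nonneg:
  assumes "-1 \<le> alp n * (x + 1) - 1" "alp n * (x + 1) - 1 \<le> 1"
  shows "poly (QP n) x \<ge> 0"
proof -
  have "\<bar>alp n * (x + 1) - 1\<bar> \<le> 1" using assms by (simp add: abs_le_iff)
  then have "\<bar>cheb_T (n + 2) (alp n * (x + 1) - 1)\<bar> \<le> 1" by (rule cheb_T_bound)
  then show ?thesis unfolding poly_QP by (simp add: abs_le_iff)
qed

lemma QP_one: "poly (QP n) 1 = 0"
proof -
  have "alp n * (1 + 1) - 1 = cos (pi / real (n + 2))" using alp_props(3)[of n] by (simp add: algebra_simps)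
  then show ?thesis using cheb_at_c(3)[of "n + 2"] unfolding poly_QP by simp
qed

lemma QP_factor: "\<exists>R. QP n = [:-1, 1:] ^ 2 * R"
proof -
  obtain R1 where R1: "QP n = [:-1, 1:] * R1"
    using QP_one[of n] by (auto simp: poly_eq_0_iff_dvd dvd_def)
  have pR1: "poly (QP n) x = (x - 1) * poly R1 x" for x by (simp add: R1 algebra_simps)
  have cont: "isCont (poly R1) 1" by simp
  have left: "poly R1 1 \<le> 0"
  proof (rule tendsto_upperbound)
    show "(poly R1 \<longlongrightarrow> poly R1 1) (at_left 1)"
      using cont by (simp add: isCont_def filterlim_at_split)
    have "eventually (\<lambda>x. x \<in> {0<..<1}) (at_left (1::real))" by (rule eventually_at_left_real) simp
    then show "eventually (\<lambda>x. poly R1 x \<le> 0) (at_left 1)"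
    proof (rule eventually_mono)
      fix x :: real assume x: "x \<in> {0<..<1}"
      have "poly (QP n) x \<ge> 0"
        using x alp_props[of n] by (intro QP_nonneg) (auto intro: mult_nonneg_nonneg simp: algebra_simps, smt (verit) mult_left_le_one_le)
      then show "poly R1 x \<le> 0" using x unfolding pR1 by (simp add: zero_le_mult_iff)
    qed
  qed simp
  have right: "poly R1 1 \<ge> 0"
  proof (rule tendsto_lowerbound)
    show "(poly R1 \<longlongrightarrow> poly R1 1) (at_right 1)"
      using cont by (simp add: isCont_def filterlim_at_split)
    define \<delta> where "\<delta> = (2 - 2 * alp n) / alp n"
    have d0: "\<delta> > 0" using alp_props[of n] by (simp add: \<delta>_def)
    have "eventually (\<lambda>x. x \<in> {1<..<1 + \<delta>}) (at_right (1::real))" by (rule eventually_at_right_real) (use d0 in simp)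
    then show "eventually (\<lambda>x. 0 \<le> poly R1 x) (at_right 1)"
    proof (rule eventually_mono)
      fix x :: real assume x: "x \<in> {1<..<1 + \<delta>}"
      have a: "0 < alp n" "alp n < 1" using alp_props by auto
      have "alp n * (x - 1) < alp n * \<delta>" using x a by (intro mult_strict_left_mono) auto
      also have "alp n * \<delta> = 2 - 2 * alp n" using a by (simp add: \<delta>_def)
      finally have "alp n * (x + 1) - 1 \<le> 1" by (simp add: algebra_simps)
      moreover have "-1 \<le> alp n * (x + 1) - 1" using x a by (simp add: mult_nonneg_nonneg)
      ultimately have "poly (QP n) x \<ge> 0" using QP_nonneg by blast
      then show "0 \<le> poly R1 x" using x unfolding pR1 by (simp add: zero_le_mult_iff)
    qed
  qed simp
  have "poly R1 1 = 0" using left right by simp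
  then obtain R where "R1 = [:-1, 1:] * R" by (auto simp: poly_eq_0_iff_dvd dvd_def)
  then have "QP n = [:-1, 1:] ^ 2 * R" using R1 by (simp only: power2_eq_square mult.assoc)
  then show ?thesis by blast
qed

definition RP :: "nat \<Rightarrow> real poly" where "RP n = (SOME R. QP n = [:-1, 1:] ^ 2 * R)"
definition PS :: "nat \<Rightarrow> real poly" where "PS n = smult (Kc n) (RP n)"

lemma RP: "QP n = [:-1, 1:] ^ 2 * RP n"
  unfolding RP_def using QP_factor[of n] by (rule someI_ex)

lemma poly_QP_RP: "poly (QP n) x = (x - 1)\<^sup>2 * poly (RP n) x"
  by (subst RP) (simp add: power2_eq_square algebra_simps)

lemma degree_QP: "degree (QP n) = n + 2"
proof -
  have "degree (pcompose (cheb_poly (n + 2)) [:alp n - 1, alp n:]) = n + 2"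
    using alp_props(1)[of n] by (simp add: degree_pcompose)
  then show ?thesis unfolding QP_def by (subst degree_add_eq_left) auto
qed

lemma degree_RP: "degree (RP n) = n"
proof -
  have "RP n \<noteq> 0" using degree_QP[of n] RP[of n] by auto
  then have "degree (QP n) = 2 + degree (RP n)"
    by (subst RP) (simp add: degree_mult_eq degree_power_eq)
  then show ?thesis using degree_QP[of n] by simp
qed

lemma degree_PS: "degree (PS n) \<le> n"
  unfolding PS_def using degree_RP[of n] degree_smult_le[of "Kc n" "RP n"] by simp

lemma d2_at1: "poly (pderiv (pderiv ([:-1, 1:] ^ 2 * R))) 1 = 2 * poly (R :: real poly) 1"
proof -
  define A :: "real poly" where "A = [:-1, 1:]"
  have pA: "pderiv A = 1" by (simp add: A_def pderiv_pCons)
  have A1: "poly A 1 = 0" by (simp add: A_def)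
  have "pderiv (A ^ 2 * R) = A * A * pderiv R + R * (A + A)"
    by (simp add: pderiv_mult pA power2_eq_square algebra_simps)
  then have "pderiv (pderiv (A ^ 2 * R)) = pderiv (A * A * pderiv R) + pderiv (R * (A + A))"
    by (simp add: pderiv_add)
  then have "poly (pderiv (pderiv (A ^ 2 * R))) 1 = 2 * poly R 1"
    by (simp add: pderiv_mult pderiv_add pA A1)
  then show ?thesis unfolding A_def .
qed

lemma RP_one: "2 * poly (RP n) 1 = (alp n)\<^sup>2 * ((real n + 2)\<^sup>2 / (sin (pi / (real n + 2)))\<^sup>2)"
proof -
  define L where "L = [:alp n - 1, alp n:]"
  define T where "T = cheb_poly (n + 2)"
  have "pderiv (pderiv (QP n)) = smult ((alp n)\<^sup>2) (pcompose (pderiv (pderiv T)) L)"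
    unfolding QP_def T_def[symmetric] L_def[symmetric]
    by (simp add: pderiv_add pderiv_pcompose pderiv_mult pderiv_smult L_def pderiv_pCons power2_eq_square)
  then have "poly (pderiv (pderiv (QP n))) 1 = (alp n)\<^sup>2 * poly (pderiv (pderiv T)) (poly L 1)"
    by (simp add: poly_pcompose)
  moreover have "poly L 1 = cos (pi / real (n + 2))"
  proof -
    have r: "real (n + 2) = real n + 2" by simp
    show ?thesis unfolding r L_def using alp_props(3)[of n] by simp
  qed
  ultimately have "poly (pderiv (pderiv (QP n))) 1 = (alp n)\<^sup>2 * ((real (n + 2))\<^sup>2 / (sin (pi / real (n + 2)))\<^sup>2)"
    using cheb_at_c(2)[of "n + 2"] unfolding T_def by simp
  moreover have "poly (pderiv (pderiv (QP n))) 1 = 2 * poly (RP n) 1"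
    by (subst RP) (rule d2_at1)
  ultimately show ?thesis by (simp add: add.commute[of 2])
qed

lemma trig_arith:
  fixes N S C :: real
  assumes "N > 0" "S > 0" "C > 0"
  shows "8 / N\<^sup>2 * (S / C)\<^sup>2 * (((C\<^sup>2)\<^sup>2) * (N\<^sup>2 / (2 * S * C)\<^sup>2)) / 2 = 1"
  using assms by (simp add: field_simps power2_eq_square)

lemma PS_one: "poly (PS n) 1 = 1"
proof -
  define h where "h = pi / (2 * real n + 4)"
  have h1: "0 < h" unfolding h_def by simp
  have "h \<le> pi / 4" unfolding h_def by (intro divide_left_mono) auto
  then have h0: "0 < h" "h < pi / 2" using h1 pi_gt_zero by linarith+
  have sh: "sin h > 0" using h0 by (intro sin_gt_zero) auto
  have ch: "cos h > 0" using h0 by (intro cos_gt_zero) auto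
  have e1: "pi / (real n + 2) = 2 * h" unfolding h_def by (simp add: field_simps)
  have a: "alp n = (cos h)\<^sup>2" unfolding alp_def e1 cos_double_cos by simp
  have s2: "sin (2 * h) = 2 * sin h * cos h" by (rule sin_double)
  have K: "Kc n = 8 / (real n + 2)\<^sup>2 * (sin h / cos h)\<^sup>2" unfolding Kc_def h_def[symmetric] tan_def ..
  have N0: "real n + 2 > 0" by simp
  have "poly (PS n) 1 = Kc n * poly (RP n) 1" by (simp add: PS_def)
  also have "\<dots> = Kc n * ((alp n)\<^sup>2 * ((real n + 2)\<^sup>2 / (sin (pi / (real n + 2)))\<^sup>2)) / 2"
  proof -
    define X where "X = (alp n)\<^sup>2 * ((real n + 2)\<^sup>2 / (sin (pi / (real n + 2)))\<^sup>2)"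
    have "2 * poly (RP n) 1 = X" unfolding X_def by (rule RP_one)
    then have "poly (RP n) 1 = X / 2" by linarith
    then show ?thesis unfolding X_def by simp
  qed
  also have "\<dots> = 1"
    unfolding K a e1 s2 using trig_arith[OF N0 sh ch] by simp
  finally show ?thesis .
qed

lemma S_poly_PS:
  assumes "x \<noteq> 1"
  shows "S_poly n x = poly (PS n) x"
proof -
  have x: "(1 - x)\<^sup>2 \<noteq> 0" using assms by simp
  have "S_poly n x = Kc n * (1 / (1 - x)\<^sup>2) * poly (QP n) x"
    unfolding S_poly_def Kc_def poly_QP alp_def by simp
  also have "\<dots> = Kc n * poly (RP n) x"
    unfolding poly_QP_RP using x by (simp add: power2_commute[of x 1] field_simps)
  finally show ?thesis by (simp add: PS_def)
qed

lemma lagrange: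
  fixes D :: "real poly" and x :: "nat \<Rightarrow> real"
  assumes J: "finite J" and inj: "inj_on x J" and deg: "degree D < card J"
  shows "poly D z = (\<Sum>k\<in>J. poly D (x k) * (\<Prod>j\<in>J-{k}. (z - x j)) / (\<Prod>j\<in>J-{k}. (x k - x j)))"
proof -
  define L where "L = (\<Sum>k\<in>J. smult (poly D (x k) / (\<Prod>j\<in>J-{k}. (x k - x j))) (\<Prod>j\<in>J-{k}. [:- x j, 1:]))"
  have degL: "degree L \<le> card J - 1"
    unfolding L_def
  proof (intro degree_sum_le[OF J])
    fix k assume k: "k \<in> J"
    have "degree (\<Prod>j\<in>J-{k}. [:- x j, 1:]) \<le> (\<Sum>j\<in>J-{k}. degree [:- x j, 1:])"
      using degree_prod_sum_le[of "J - {k}" "\<lambda>j. [:- x j, 1:]"] J by (simp add: o_def)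
    also have "\<dots> = card J - 1" using J k by simp
    finally show "degree (smult (poly D (x k) / (\<Prod>j\<in>J-{k}. (x k - x j))) (\<Prod>j\<in>J-{k}. [:- x j, 1:])) \<le> card J - 1"
      by (rule order.trans[OF degree_smult_le])
  qed
  have polyL: "poly L z = (\<Sum>k\<in>J. poly D (x k) * (\<Prod>j\<in>J-{k}. (z - x j)) / (\<Prod>j\<in>J-{k}. (x k - x j)))" for z
    unfolding L_def by (simp add: poly_sum poly_prod)
  have agree: "poly D (x i) = poly L (x i)" if i: "i \<in> J" for i
  proof -
    have z: "poly D (x k) * (\<Prod>j\<in>J-{k}. (x i - x j)) / (\<Prod>j\<in>J-{k}. (x k - x j)) = 0"
      if "k \<in> J" "k \<noteq> i" for k
    proof -
      have iJ: "i \<in> J - {k}" using i that by simp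
      have "(\<Prod>j\<in>J-{k}. (x i - x j)) = (x i - x i) * (\<Prod>j\<in>J-{k}-{i}. (x i - x j))"
        using J iJ by (intro prod.remove) auto
      then have "(\<Prod>j\<in>J-{k}. (x i - x j)) = 0" by simp
      then show ?thesis by simp
    qed
    have "\<forall>j\<in>J-{i}. x i - x j \<noteq> 0" using inj i unfolding inj_on_def by auto
    then have nz: "(\<Prod>j\<in>J-{i}. (x i - x j)) \<noteq> 0"
      using J by (simp add: prod_zero_iff)
    have "poly L (x i) = (\<Sum>k\<in>J. if k = i then poly D (x i) else 0)"
      unfolding polyL
    proof (intro sum.cong refl)
      fix k assume k: "k \<in> J"
      show "poly D (x k) * (\<Prod>j\<in>J-{k}. (x i - x j)) / (\<Prod>j\<in>J-{k}. (x k - x j)) = (if k = i then poly D (x i) else 0)"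
      proof (cases "k = i")
        case True then show ?thesis using nz by simp
      next
        case False then show ?thesis using z[OF k False] by simp
      qed
    qed
    also have "\<dots> = poly D (x i)" using J i by simp
    finally show ?thesis by simp
  qed
  have "D = L"
  proof (rule poly_eqI_degree[of "x ` J"])
    show "\<And>y. y \<in> x ` J \<Longrightarrow> poly D y = poly L y" using agree by blast
    show "degree D < card (x ` J)" using deg card_image[OF inj] by simp
    show "degree L < card (x ` J)" using degL deg card_image[OF inj] by simp
  qed
  then have "poly D z = poly L z" by simp
  also have "\<dots> = (\<Sum>k\<in>J. poly D (x k) * (\<Prod>j\<in>J-{k}. (z - x j)) / (\<Prod>j\<in>J-{k}. (x k - x j)))"
    by (rule polyL)
  finally show ?thesis .
qed

declare cheb_T.simps(3)[simp del] cheb_poly.simps(3)[simp del]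

definition xk :: "nat \<Rightarrow> nat \<Rightarrow> real" where
  "xk n k = (cos (real k * pi / (real n + 2)) + 1) / alp n - 1"

lemma xk_y: "alp n * (xk n k + 1) - 1 = cos (real k * pi / (real n + 2))"
  using alp_props(1)[of n] by (simp add: xk_def)

lemma QP_xk: "poly (QP n) (xk n k) = 1 + (-1) ^ k"
proof -
  have "cheb_T (n + 2) (cos (real k * pi / (real n + 2))) = cos (real (n + 2) * (real k * pi / (real n + 2)))"
    by (rule cheb_T_cos)
  also have "real (n + 2) * (real k * pi / (real n + 2)) = real k * pi"
  proof -
    have N0: "real n + 2 \<noteq> 0" by simp
    have r: "real (n + 2) = real n + 2" by simp
    show ?thesis unfolding r using N0 by (simp add: field_simps)
  qed
  finally show ?thesis unfolding poly_QP xk_y by simp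
qed

lemma xk_mono:
  assumes "i < j" "j \<le> n + 2"
  shows "xk n j < xk n i"
proof -
  have N: "real n + 2 > 0" by simp
  have "cos (real j * pi / (real n + 2)) < cos (real i * pi / (real n + 2))"
  proof (rule cos_monotone_0_pi)
    show "0 \<le> real i * pi / (real n + 2)" by simp
    show "real i * pi / (real n + 2) < real j * pi / (real n + 2)"
      using assms N by (intro divide_strict_right_mono mult_strict_right_mono) auto
    have "real j \<le> real n + 2" using assms by simp
    then have "real j * pi \<le> (real n + 2) * pi" by (intro mult_right_mono) auto
    then show "real j * pi / (real n + 2) \<le> pi" using N by (simp add: divide_le_eq)
  qed
  then show ?thesis unfolding xk_def using alp_props(1)[of n] by (simp add: divide_strict_right_mono)
qed

lemma xk_ge: "xk n k \<ge> -1"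
proof -
  have "0 \<le> cos (real k * pi / (real n + 2)) + 1" using cos_ge_minus_one[of "real k * pi / (real n + 2)"] by linarith
  then have "0 \<le> (cos (real k * pi / (real n + 2)) + 1) / alp n" using alp_props(1)[of n] by simp
  then show ?thesis unfolding xk_def by simp
qed

lemma xk_one: "xk n 1 = 1"
proof -
  have "cos (pi / (real n + 2)) + 1 = 2 * alp n" using alp_props(3)[of n] by simp
  then show ?thesis unfolding xk_def using alp_props(1)[of n] by simp
qed

lemma xk_lt1: "2 \<le> k \<Longrightarrow> k \<le> n + 2 \<Longrightarrow> xk n k < 1"
  using xk_mono[of 1 k n] xk_one[of n] by simp

lemma sign_prod:
  fixes f :: "nat \<Rightarrow> real"
  assumes "finite A" "\<And>j. j \<in> A \<Longrightarrow> f j < 0"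
  shows "(-1) ^ card A * prod f A > 0"
  using assms
proof (induction A rule: finite_induct)
  case empty then show ?case by simp
next
  case (insert a A)
  have "(-1) ^ card (insert a A) * prod f (insert a A) = (- f a) * ((-1) ^ card A * prod f A)"
    using insert by simp
  moreover have "- f a > 0" using insert by simp
  moreover have "(-1) ^ card A * prod f A > 0" using insert by simp
  ultimately show ?case using mult_neg_pos[of "f a" "(-1) ^ card A * prod f A"] by simp
qed

lemma node_sign:
  assumes k: "k \<in> {2..n+2}"
  shows "(-1) ^ k * (\<Prod>j\<in>{2..n+2}-{k}. (xk n k - xk n j)) > 0"
proof -
  have split: "{2..n+2}-{k} = {2..<k} \<union> {k<..n+2}" using k by auto
  have "(\<Prod>j\<in>{2..n+2}-{k}. (xk n k - xk n j)) = (\<Prod>j\<in>{2..<k}. (xk n k - xk n j)) * (\<Prod>j\<in>{k<..n+2}. (xk n k - xk n j))"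
    unfolding split by (rule prod.union_disjoint) auto
  moreover have "(\<Prod>j\<in>{k<..n+2}. (xk n k - xk n j)) > 0"
    by (rule prod_pos) (use xk_mono in auto)
  moreover have "(-1) ^ card {2..<k} * (\<Prod>j\<in>{2..<k}. (xk n k - xk n j)) > 0"
    by (rule sign_prod) (use k xk_mono in auto)
  moreover have "(-1) ^ k = ((-1) ^ card {2..<k} :: real)"
  proof -
    have k2: "2 \<le> k" using k by simp
    obtain m where m: "k = 2 + m" using le_Suc_ex[OF k2] by blast
    have "((-1) ^ k :: real) = (-1) ^ m" unfolding m by (simp add: power_add)
    moreover have "card {2..<k} = m" unfolding m by simp
    ultimately show ?thesis by simp
  qed
  ultimately show ?thesis by (simp add: mult.assoc[symmetric])
qed

lemma PS_QP: "(1 - x)\<^sup>2 * poly (PS n) x = Kc n * poly (QP n) x"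
  unfolding poly_QP_RP PS_def by (simp add: power2_commute[of x 1])

lemma extremal:
  fixes p :: "real poly"
  assumes deg: "degree p \<le> n" and p1: "poly p 1 = 1"
    and nn: "\<And>x. -1 \<le> x \<Longrightarrow> x \<le> 1 \<Longrightarrow> poly p x \<ge> 0"
    and bd: "\<And>x. -1 \<le> x \<Longrightarrow> x \<le> 1 \<Longrightarrow> (1 - x)\<^sup>2 * poly p x \<le> 2 * Kc n"
  shows "p = PS n"
proof -
  define J where "J = {2..n+2}"
  define D where "D = PS n - p"
  have fJ: "finite J" by (simp add: J_def)
  have cJ: "card J = n + 1" by (simp add: J_def)
  have inj: "inj_on (xk n) J"
  proof (rule inj_onI)
    fix i j assume "i \<in> J" "j \<in> J" "xk n i = xk n j"
    then show "i = j" unfolding J_def using xk_mono[of i j n] xk_mono[of j i n]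
      by (metis atLeastAtMost_iff less_irrefl linorder_neqE_nat)
  qed
  have degD: "degree D < card J" unfolding D_def cJ
    using degree_diff_le[OF degree_PS[of n] deg] by simp
  have D1: "poly D 1 = 0" unfolding D_def using PS_one[of n] p1 by simp
  define P where "P k = (\<Prod>j\<in>J-{k}. (1 - xk n j))" for k
  define Q where "Q k = (\<Prod>j\<in>J-{k}. (xk n k - xk n j))" for k
  have lag: "poly D 1 = (\<Sum>k\<in>J. poly D (xk n k) * P k / Q k)"
    unfolding P_def Q_def by (rule lagrange[OF fJ inj degD])
  have facts: "(-1) ^ k * poly D (xk n k) \<ge> 0 \<and> P k > 0 \<and> (-1) ^ k * Q k > 0" if k: "k \<in> J" for k
  proof (intro conjI)
    define x where "x = xk n k"
    have x1: "-1 \<le> x" "x < 1" using k xk_ge xk_lt1 unfolding x_def J_def by auto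
    have pos: "(1 - x)\<^sup>2 > 0" using x1 by simp
    have PQ: "(1 - x)\<^sup>2 * poly (PS n) x = Kc n * (1 + (-1) ^ k)" unfolding PS_QP x_def QP_xk ..
    show "(-1) ^ k * poly D (xk n k) \<ge> 0"
    proof (cases "even k")
      case True
      then have "(1 - x)\<^sup>2 * poly D x = 2 * Kc n - (1 - x)\<^sup>2 * poly p x"
        using PQ unfolding D_def by (simp add: algebra_simps)
      also have "\<dots> \<ge> 0" using bd[of x] x1 by simp
      finally have "poly D x \<ge> 0" using pos by (simp add: zero_le_mult_iff)
      then show ?thesis using True unfolding x_def by simp
    next
      case False
      then have "(1 - x)\<^sup>2 * poly (PS n) x = 0" using PQ by simp
      then have "poly (PS n) x = 0" using pos by simp
      then have "poly D x = - poly p x" unfolding D_def by simp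
      then show ?thesis using False nn[of x] x1 unfolding x_def by simp
    qed
    show "P k > 0" unfolding P_def
      by (rule prod_pos) (use xk_lt1 in \<open>auto simp: J_def\<close>)
    show "(-1) ^ k * Q k > 0" unfolding Q_def using node_sign[of k n] k unfolding J_def by simp
  qed
  have terms: "poly D (xk n k) * P k / Q k = ((-1) ^ k * poly D (xk n k)) * P k / ((-1) ^ k * Q k)" for k
  proof -
    have "((-1::real) ^ k) \<noteq> 0" by simp
    then show ?thesis by simp
  qed
  have tnn: "poly D (xk n k) * P k / Q k \<ge> 0" if "k \<in> J" for k
  proof -
    have f: "(-1) ^ k * poly D (xk n k) \<ge> 0" "P k > 0" "(-1) ^ k * Q k > 0" using facts[OF that] by auto
    show ?thesis unfolding terms
      by (rule divide_nonneg_pos[OF mult_nonneg_nonneg[OF f(1) less_imp_le[OF f(2)]] f(3)])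
  qed
  have "\<forall>k\<in>J. poly D (xk n k) * P k / Q k = 0"
  proof -
    have "(\<Sum>k\<in>J. poly D (xk n k) * P k / Q k) = 0" using lag D1 by simp
    then show ?thesis using sum_nonneg_eq_0_iff[OF fJ, of "\<lambda>k. poly D (xk n k) * P k / Q k"] tnn by blast
  qed
  then have Dz: "poly D (xk n k) = 0" if "k \<in> J" for k
  proof -
    have t0: "poly D (xk n k) * P k / Q k = 0" using \<open>\<forall>k\<in>J. _\<close> that by blast
    have "P k > 0" "(-1) ^ k * Q k > 0" using facts[OF that] by auto
    then have "P k \<noteq> 0" "Q k \<noteq> 0" by auto
    then show ?thesis using t0 by simp
  qed
  have "D = 0"
  proof (rule poly_eqI_degree[of "xk n ` J"])
    show "\<And>y. y \<in> xk n ` J \<Longrightarrow> poly D y = poly 0 y" using Dz by auto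
    show "degree D < card (xk n ` J)" using degD card_image[OF inj] by simp
    show "degree (0::real poly) < card (xk n ` J)" using card_image[OF inj] cJ by simp
  qed
  then show ?thesis unfolding D_def by simp
qed

definition coefI :: "nat \<Rightarrow> real poly \<Rightarrow> real" where
  "coefI m P = 1 / pi * integral {-1..1} (\<lambda>x. poly P x * cheb_T m x / sqrt (1 - x\<^sup>2))"

lemma coefI_expand:
  assumes "m \<le> d"
  shows "coefI m (\<Sum>j\<le>d. smult (a j) (cheb_poly j)) = a m * (if m = 0 then 1 else 1 / 2)"
proof -
  have eq: "poly (\<Sum>j\<le>d. smult (a j) (cheb_poly j)) x * cheb_T m x / sqrt (1 - x\<^sup>2)
      = (\<Sum>j\<le>d. a j * (cheb_T j x * cheb_T m x / sqrt (1 - x\<^sup>2)))" for x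
    by (simp add: poly_sum sum_distrib_right sum_divide_distrib mult.assoc)
  have "((\<lambda>x. \<Sum>j\<le>d. a j * (cheb_T j x * cheb_T m x / sqrt (1 - x\<^sup>2))) has_integral
      (\<Sum>j\<le>d. a j * (if j = m then (if m = 0 then pi else pi / 2) else 0))) {-1..1}"
    by (intro has_integral_sum has_integral_mult_right cheb_orth) simp
  moreover have "(\<Sum>j\<le>d. a j * (if j = m then (if m = 0 then pi else pi / 2) else 0)) = a m * (if m = 0 then pi else pi / 2)"
    using assms by (simp add: if_distrib[of "\<lambda>x. _ * x"] cong: if_cong)
  ultimately have "((\<lambda>x. poly (\<Sum>j\<le>d. smult (a j) (cheb_poly j)) x * cheb_T m x / sqrt (1 - x\<^sup>2)) has_integral
      (a m * (if m = 0 then pi else pi / 2))) {-1..1}"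
    unfolding eq by simp
  then have "integral {-1..1} (\<lambda>x. poly (\<Sum>j\<le>d. smult (a j) (cheb_poly j)) x * cheb_T m x / sqrt (1 - x\<^sup>2))
      = a m * (if m = 0 then pi else pi / 2)" by (rule integral_unique)
  then show ?thesis unfolding coefI_def by simp
qed

lemma upoly_expand:
  "upoly n u = (\<Sum>j\<le>n. smult (if j = 0 then u 0 else 2 * u (int j)) (cheb_poly j))"
proof -
  have "(\<Sum>j\<le>n. smult (if j = 0 then u 0 else 2 * u (int j)) (cheb_poly j))
      = smult (u 0) (cheb_poly 0) + (\<Sum>j = 1..n. smult (if j = 0 then u 0 else 2 * u (int j)) (cheb_poly j))"
    by (simp add: atMost_atLeast0 sum.atLeast_Suc_atMost)
  also have "(\<Sum>j = 1..n. smult (if j = 0 then u 0 else 2 * u (int j)) (cheb_poly j))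
      = (\<Sum>j = 1..n. smult (2 * u (int j)) (cheb_poly j))"
    by (intro sum.cong refl) auto
  finally show ?thesis by (simp add: upoly_def)
qed

lemma coefI_upoly:
  assumes "m \<le> n"
  shows "coefI m (upoly n u) = u (int m)"
  unfolding upoly_expand using coefI_expand[OF assms, of "\<lambda>j. if j = 0 then u 0 else 2 * u (int j)"]
  by auto

lemma coefI_S:
  "coefI m (PS n) = 1 / pi * integral {-1..1} (\<lambda>x. S_poly n x * cheb_T m x / sqrt (1 - x\<^sup>2))"
proof -
  have "integral {-1..1} (\<lambda>x. S_poly n x * cheb_T m x / sqrt (1 - x\<^sup>2))
      = integral {-1..1} (\<lambda>x. poly (PS n) x * cheb_T m x / sqrt (1 - x\<^sup>2))"
  proof (rule integral_cong)
    fix x :: real assume "x \<in> {-1..1}"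
    show "S_poly n x * cheb_T m x / sqrt (1 - x\<^sup>2) = poly (PS n) x * cheb_T m x / sqrt (1 - x\<^sup>2)"
    proof (cases "x = 1")
      case True then show ?thesis by simp
    next
      case False then show ?thesis by (simp add: S_poly_PS)
    qed
  qed
  then show ?thesis unfolding coefI_def by simp
qed

lemma PS_bound:
  assumes "-1 \<le> x" "x \<le> 1"
  shows "(1 - x)\<^sup>2 * poly (PS n) x \<le> 2 * Kc n"
proof -
  have y: "-1 \<le> alp n * (x + 1) - 1" "alp n * (x + 1) - 1 \<le> 1"
  proof -
    have a: "0 < alp n" "alp n < 1" using alp_props by auto
    show "-1 \<le> alp n * (x + 1) - 1" using a assms by simp
    have "alp n * (x + 1) \<le> 1 * 2" using a assms by (intro mult_mono) auto
    then show "alp n * (x + 1) - 1 \<le> 1" by simp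
  qed
  have "\<bar>cheb_T (n + 2) (alp n * (x + 1) - 1)\<bar> \<le> 1" using y by (intro cheb_T_bound) (simp add: abs_le_iff)
  then have "poly (QP n) x \<le> 2" unfolding poly_QP by (simp add: abs_le_iff)
  moreover have "Kc n \<ge> 0" by (simp add: Kc_def)
  ultimately have "Kc n * poly (QP n) x \<le> Kc n * 2" by (rule mult_left_mono)
  then show ?thesis unfolding PS_QP by (simp add: mult.commute)
qed

lemma PS_max: "(1 - xk n 2)\<^sup>2 * poly (PS n) (xk n 2) = 2 * Kc n"
  unfolding PS_QP QP_xk by simp

theorem theorem1p4:
  fixes n :: nat and u :: "int \<Rightarrow> real"
  assumes "n \<ge> 1"
    and "\<And>j. \<bar>j\<bar> > int n \<Longrightarrow> u j = 0"
    and "\<And>j. u j = u (- j)"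
    and "(\<Sum>j = - int n .. int n. u j) = 1"
    and "\<And>\<xi>. fourier n u \<xi> \<in> \<real>\<^sub>\<ge>\<^sub>0"
  shows "op_sup n u \<ge> 2 ^ 6 / (real n + 2)\<^sup>2 * (tan (pi / (2 * real n + 4)))\<^sup>2
    \<and> (op_sup n u = 2 ^ 6 / (real n + 2)\<^sup>2 * (tan (pi / (2 * real n + 4)))\<^sup>2
        \<longleftrightarrow> (\<forall>m \<in> {0..n}. u (int m) = u (- int m) \<and>
              u (int m) = 1 / pi * integral {-1..1}
                 (\<lambda>x. S_poly n x * cheb_T m x / sqrt (1 - x\<^sup>2))))"
proof -
  note sym = assms(3) and pos = assms(5)
  define V where "V = 2 ^ 6 / (real n + 2)\<^sup>2 * (tan (pi / (2 * real n + 4)))\<^sup>2"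
  have V: "V = 4 * (2 * Kc n)" unfolding V_def Kc_def by simp
  define p where "p = upoly n u"
  have p1: "poly p 1 = 1" unfolding p_def by (rule upoly_one[OF sym assms(4)])
  have pnn: "\<And>x. -1 \<le> x \<Longrightarrow> x \<le> 1 \<Longrightarrow> poly p x \<ge> 0" unfolding p_def by (rule upoly_nonneg[OF sym pos])
  have pdeg: "degree p \<le> n" unfolding p_def by (rule degree_upoly)
  have ms: "msym n u t = 4 * ((1 - cos t)\<^sup>2 * poly p (cos t))" for t
    unfolding msym_def p_def by simp
  have X: "p = PS n" if "\<And>t. msym n u t \<le> V"
  proof (rule extremal[OF pdeg p1 pnn])
    fix x :: real assume x: "-1 \<le> x" "x \<le> 1"
    have "cos (arccos x) = x" using x by simp
    then have "4 * ((1 - x)\<^sup>2 * poly p x) \<le> 4 * (2 * Kc n)"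
      using that[of "arccos x"] unfolding ms V by simp
    then show "(1 - x)\<^sup>2 * poly p x \<le> 2 * Kc n" by linarith
  qed auto
  have Y1: "msym n u t \<le> V" if "p = PS n" for t
    unfolding ms V that using PS_bound[of "cos t" n] by (simp add: mult.commute)
  have Y2: "msym n u (arccos (xk n 2)) = V" if "p = PS n"
  proof -
    have "-1 \<le> xk n 2" "xk n 2 \<le> 1" using xk_ge[of n 2] xk_lt1[of 2 n] by auto
    then have "cos (arccos (xk n 2)) = xk n 2" by simp
    then show ?thesis unfolding ms V that using PS_max[of n] by (simp add: mult.commute)
  qed
  have up: "\<And>t. msym n u t \<le> op_sup n u" by (rule op_sup_props(1)[OF sym pos])
  have ge: "V \<le> op_sup n u"
  proof (cases "\<forall>t. msym n u t \<le> V")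
    case True
    then have "p = PS n" using X by blast
    then show ?thesis using Y2 up by metis
  next
    case False
    then obtain t where "msym n u t > V" by (auto simp: not_le)
    then show ?thesis using up[of t] by simp
  qed
  have eqiff: "op_sup n u = V \<longleftrightarrow> p = PS n"
  proof
    assume "op_sup n u = V"
    then show "p = PS n" using X up by metis
  next
    assume "p = PS n"
    then have "op_sup n u \<le> V" using Y1 by (intro op_sup_props(2)[OF sym pos]) blast
    then show "op_sup n u = V" using ge by simp
  qed
  have coefiff: "p = PS n \<longleftrightarrow> (\<forall>m \<in> {0..n}. u (int m) = u (- int m) \<and>
              u (int m) = 1 / pi * integral {-1..1} (\<lambda>x. S_poly n x * cheb_T m x / sqrt (1 - x\<^sup>2)))"
  proof
    assume "p = PS n"
    then show "\<forall>m \<in> {0..n}. u (int m) = u (- int m) \<and>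
              u (int m) = 1 / pi * integral {-1..1} (\<lambda>x. S_poly n x * cheb_T m x / sqrt (1 - x\<^sup>2))"
      using sym coefI_upoly[of _ n u] coefI_S unfolding p_def by auto
  next
    assume H: "\<forall>m \<in> {0..n}. u (int m) = u (- int m) \<and>
              u (int m) = 1 / pi * integral {-1..1} (\<lambda>x. S_poly n x * cheb_T m x / sqrt (1 - x\<^sup>2))"
    obtain c where c: "PS n = (\<Sum>j\<le>n. smult (c j) (cheb_poly j))"
      using cheb_expand[OF degree_PS] by blast
    have cm: "u (int m) = c m * (if m = 0 then 1 else 1 / 2)" if "m \<le> n" for m
    proof -
      have "m \<in> {0..n}" using that by simp
      then have "u (int m) = 1 / pi * integral {-1..1} (\<lambda>x. S_poly n x * cheb_T m x / sqrt (1 - x\<^sup>2))"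
        using H by blast
      then have "u (int m) = coefI m (PS n)" unfolding coefI_S .
      also have "\<dots> = c m * (if m = 0 then 1 else 1 / 2)" unfolding c by (rule coefI_expand[OF that])
      finally show ?thesis .
    qed
    then have "(if j = 0 then u 0 else 2 * u (int j)) = c j" if "j \<le> n" for j
      using that cm[of j] by (cases "j = 0") auto
    then have "upoly n u = (\<Sum>j\<le>n. smult (c j) (cheb_poly j))"
      unfolding upoly_expand by (intro sum.cong refl) auto
    then show "p = PS n" unfolding p_def c .
  qed
  show ?thesis using ge eqiff coefiff unfolding V_def by simp
qed

end
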